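(* Consider hotspot destination traffic on the ring network described in the context, with shortest-path routing, and the wavelength $\Lambda$ on which the hotspot $N$ is homed. Let $\ell\in\{1,\ldots,\eta\}$ be such that $|\mathcal{F}_\Lambda|=\ell$ has positive probability, and let $q_\beta^\ell$ denote the hotspot destination traffic measure conditioned on $|\mathcal{F}_\Lambda|=\ell$. Then \[ \frac{1}{\ell+1}\Big(1-\frac{1}{\ell\eta}\Big)\le q_\beta^{\ell}(\mathcal{G}_\Lambda=0)\le \frac{1}{\ell+1}\Big(1+\frac{1}{\eta}\Big). \]
   Context: Network: a bidirectional ring with $N$ nodes labeled $1,\ldots,N$ clockwise (labels modulo $N$, node $N$ = node $0$ is the hotspot), $\Lambda$ wavelengths, $\eta:=N/\Lambda$ a positive integer; node $n$ is homed on wavelength $\lambda$ iff $n\in\mathcal{M}_\lambda:=\{\lambda+k\Lambda:k=0,\ldots,\eta-1\}$ (so $N\in\mathcal{M}_\Lambda$). Hotspot destination traffic: the sender $S$ is uniform on $\{1,\ldots,N-1\}$, a fanout $l\in\{1,\ldots,N-1\}$ is drawn from a distribution $(\nu_l)$, and the destination set is $\mathcal{F}=\mathcal{F}'\cup\{N\}$ with $\mathcal{F}'$ uniform among $(l-1)$-subsets of $\{1,\ldots,N-1\}\setminus\{S\}$. Let $\mathcal{F}_\Lambda:=\mathcal{F}\cap\mathcal{M}_\Lambda$ and $\mathcal{A}_\Lambda:=\mathcal{F}_\Lambda\cup\{S\}=\{X_1<\dots<X_{k}\}\subset\{1,\ldots,N\}$. The gaps are the clockwise arcs between cyclically consecutive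 active nodes, with lengths $X_1+N-X_{k}$ and $X_i-X_{i-1}$; a largest gap is chosen uniformly at random among ties (the chosen largest gap), and $\mathcal{G}_\Lambda\in\{0,\ldots,N-1\}$ is the node at which it starts in the clockwise sense. *)

theory Defs
  imports "HOL-Probability.Probability"
begin

text \<open>Nodes are labelled 1..N (node N is node 0, the hotspot).  The set of nodes
  homed on wavelength lam, for Lambda wavelengths and eta = N div Lambda.\<close>
definition homed :: "nat \<Rightarrow> nat \<Rightarrow> nat \<Rightarrow> nat set" where
  "homed N Lam lam = {lam + k * Lam | k. k < N div Lam}"

definition gap_len :: "nat \<Rightarrow> nat set \<Rightarrow> nat \<Rightarrow> nat" where
  "gap_len N A x = (if \<exists>y\<in>A. x < y then Min {y\<in>A. x < y} - x else Min A + N - x)"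

definition largest_gap_starts :: "nat \<Rightarrow> nat set \<Rightarrow> nat set" where
  "largest_gap_starts N A =
     (\<lambda>x. x mod N) ` {x\<in>A. \<forall>y\<in>A. gap_len N A y \<le> gap_len N A x}"

text \<open>Hotspot destination traffic: outcome (S, F, G_Lambda).\<close>
definition hotspot_traffic :: "nat \<Rightarrow> nat \<Rightarrow> nat pmf \<Rightarrow> (nat \<times> nat set \<times> nat) pmf" where
  "hotspot_traffic N Lam \<nu> =
     bind_pmf (pmf_of_set {1..N-1}) (\<lambda>S.
     bind_pmf \<nu> (\<lambda>l.
     bind_pmf (pmf_of_set {B. B \<subseteq> {1..N-1} - {S} \<and> card B = l - 1}) (\<lambda>F0.
     bind_pmf (pmf_of_set (largest_gap_starts N (insert S (insert N F0 \<inter> homed N Lam Lam)))) (\<lambda>G.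
     return_pmf (S, insert N F0, G)))))"

end

theory Submission
  imports Defs
begin



definition dst :: "nat \<Rightarrow> nat \<Rightarrow> nat \<Rightarrow> nat" where "dst N x a = (a + N - x) mod N"
lemma dst_eq: assumes x: "x \<in> {1..N}" and a: "a \<in> {1..N}"
  shows "dst N x a = (if x \<le> a then a - x else a + N - x)"
proof (cases "x \<le> a")
  case True
  have e: "a + N - x = (a - x) + N" using True by simp
  have l: "a - x < N" using x a by presburger
  have "(a + N - x) mod N = a - x" using e l by (metis mod_add_self2 mod_less)
  then show ?thesis unfolding dst_def using True by simp
next
  case False
  have l: "a + N - x < N" using False x a by presburger
  show ?thesis unfolding dst_def using False l by simp
qed
lemma dst_cases: "x \<in> {1..N} \<Longrightarrow> a \<in> {1..N} \<Longrightarrow>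
   (x \<le> a \<and> int (dst N x a) = int a - int x) \<or> (a < x \<and> int (dst N x a) = int a + int N - int x)"
  by (cases "x \<le> a") (simp_all add: dst_eq of_nat_diff)
lemma dst_pos: assumes "x \<in> {1..N}" "a \<in> {1..N}" "x \<noteq> a" shows "0 < dst N x a \<and> dst N x a < N"
proof -
  have h: "(x \<le> a \<and> int (dst N x a) = int a - int x) \<or> (a < x \<and> int (dst N x a) = int a + int N - int x)"
    using dst_cases[OF assms(1,2)] .
  have r: "1 \<le> x" "x \<le> N" "1 \<le> a" "a \<le> N" using assms by auto
  from h r assms(3) show ?thesis by (elim disjE conjE; linarith)
qed
lemma dst_swap: assumes "x \<in> {1..N}" "a \<in> {1..N}" "x \<noteq> a" shows "dst N x a + dst N a x = N"
proof -
  have h: "(x \<le> a \<and> int (dst N x a) = int a - int x) \<or> (a < x \<and> int (dst N x a) = int a + int N - int x)"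
    using dst_cases[OF assms(1,2)] .
  have h2: "(a \<le> x \<and> int (dst N a x) = int x - int a) \<or> (x < a \<and> int (dst N a x) = int x + int N - int a)"
    using dst_cases[OF assms(2,1)] .
  have r: "1 \<le> x" "x \<le> N" "1 \<le> a" "a \<le> N" using assms by auto
  from h h2 r assms(3) show ?thesis by (elim disjE conjE; linarith)
qed
lemma dst_trans: assumes "a \<in> {1..N}" "b \<in> {1..N}" "c \<in> {1..N}" "a \<noteq> c"
   "dst N a b + dst N b c < N" shows "dst N a c = dst N a b + dst N b c"
proof -
  have h1: "(a \<le> b \<and> int (dst N a b) = int b - int a) \<or> (b < a \<and> int (dst N a b) = int b + int N - int a)"
    using dst_cases[OF assms(1,2)] .
  have h2: "(b \<le> c \<and> int (dst N b c) = int c - int b) \<or> (c < b \<and> int (dst N b c) = int c + int N - int b)"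
    using dst_cases[OF assms(2,3)] .
  have h3: "(a \<le> c \<and> int (dst N a c) = int c - int a) \<or> (c < a \<and> int (dst N a c) = int c + int N - int a)"
    using dst_cases[OF assms(1,3)] .
  have r: "1 \<le> a" "a \<le> N" "1 \<le> b" "b \<le> N" "1 \<le> c" "c \<le> N" using assms by auto
  from h1 h2 h3 r assms(4,5) show ?thesis by (elim disjE conjE; linarith)
qed

definition gp :: "nat \<Rightarrow> nat set \<Rightarrow> nat \<Rightarrow> nat" where "gp N W x = Min (dst N x ` (W - {x}))"
definition AM :: "nat \<Rightarrow> nat set \<Rightarrow> nat set" where "AM N W = {x\<in>W. \<forall>y\<in>W. gp N W y \<le> gp N W x}"
definition gw :: "nat \<Rightarrow> nat set \<Rightarrow> nat \<Rightarrow> real" where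
  "gw N W a = (if a \<in> AM N W then 1 / real (card (AM N W)) else 0)"

lemma Min_le_Min_ex: "finite A \<Longrightarrow> B \<noteq> {} \<Longrightarrow> finite B \<Longrightarrow> (\<forall>b\<in>B. \<exists>a\<in>A. a \<le> (b::nat)) \<Longrightarrow> Min A \<le> Min B"
proof -
  assume a: "finite A" "B \<noteq> {}" "finite B" "\<forall>b\<in>B. \<exists>a\<in>A. a \<le> (b::nat)"
  have "Min B \<in> B" using a by (intro Min_in) auto
  then obtain c where "c \<in> A" "c \<le> Min B" using a by blast
  then show ?thesis using a(1) by (meson Min_le order_trans)
qed

lemma gp_le_mono:
  assumes "finite T" "t \<in> T" "(dst N t x) \<le> dst N t y" "t \<noteq> x" "t \<noteq> y"
  shows "gp N (insert x T) t \<le> gp N (insert y T) t"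
  unfolding gp_def
proof (rule Min_le_Min_ex)
  show "finite (dst N t ` (insert x T - {t}))" using assms by auto
  show "dst N t ` (insert y T - {t}) \<noteq> {}" using assms by auto
  show "finite (dst N t ` (insert y T - {t}))" using assms by auto
  show "\<forall>b\<in>dst N t ` (insert y T - {t}). \<exists>a\<in>dst N t ` (insert x T - {t}). a \<le> b"
  proof
    fix b assume "b \<in> dst N t ` (insert y T - {t})"
    then obtain z where z: "z \<in> insert y T - {t}" "b = dst N t z" by blast
    show "\<exists>a\<in>dst N t ` (insert x T - {t}). a \<le> b"
    proof (cases "z = y")
      case True
      have "dst N t x \<in> dst N t ` (insert x T - {t})" using assms(4) by blast
      then show ?thesis using True z assms(3) by blast
    next
      case False
      then have "z \<in> insert x T - {t}" using z by blast
      then show ?thesis using z by blast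
    qed
  qed
qed

lemma AM_sub: "AM N W \<subseteq> W" unfolding AM_def by blast

lemma AM_ne: "finite W \<Longrightarrow> W \<noteq> {} \<Longrightarrow> AM N W \<noteq> {}"
proof -
  assume f: "finite W" and ne: "W \<noteq> {}"
  have fi: "finite (gp N W ` W)" using f by (rule finite_imageI)
  have nei: "gp N W ` W \<noteq> {}" using ne by blast
  have "Max (gp N W ` W) \<in> gp N W ` W" using fi nei by (rule Max_in)
  then obtain x where x: "x \<in> W" "Max (gp N W ` W) = gp N W x" by blast
  have "gp N W y \<le> gp N W x" if "y \<in> W" for y
  proof -
    have "gp N W y \<le> Max (gp N W ` W)" using fi that by (intro Max_ge) blast+
    then show ?thesis using x by simp
  qed
  then show ?thesis unfolding AM_def using x by blast
qed

lemma shift: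
  assumes fin: "finite T" and ne: "T \<noteq> {}" and xT: "x \<notin> T" and yT: "y \<notin> T"
    and d: "\<And>t. t \<in> T \<Longrightarrow> dst N x t = \<delta> + dst N y t \<and> dst N t x \<le> dst N t y"
    and dp: "\<delta> > 0"
    and yA: "y \<in> AM N (insert y T)"
  shows "AM N (insert x T) = {x}"
proof -
  have gx: "gp N (insert x T) x \<ge> \<delta> + gp N (insert y T) y"
  proof -
    have ex: "insert x T - {x} = T" "insert y T - {y} = T" using xT yT by auto
    have "Min (dst N x ` T) \<in> dst N x ` T" using fin ne by (intro Min_in) auto
    then obtain t0 where t0: "t0 \<in> T" "Min (dst N x ` T) = dst N x t0" by auto
    have "Min (dst N y ` T) \<le> dst N y t0" using fin t0 by auto
    then show ?thesis unfolding gp_def ex using t0 d[of t0] by simp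
  qed
  have gt: "gp N (insert x T) t < gp N (insert x T) x" if "t \<in> T" for t
  proof -
    have "gp N (insert x T) t \<le> gp N (insert y T) t"
      using gp_le_mono[OF fin that, of N x y] d[OF that] that xT yT by auto
    also have "\<dots> \<le> gp N (insert y T) y" using yA that unfolding AM_def by auto
    finally show ?thesis using gx dp by linarith
  qed
  have xin: "x \<in> AM N (insert x T)" unfolding AM_def using gt by fastforce
  have "t \<notin> AM N (insert x T)" if "t \<in> T" for t
    using gt[OF that] unfolding AM_def by fastforce
  then show ?thesis using xin AM_sub[of N "insert x T"] by blast
qed




definition Lat :: "nat \<Rightarrow> nat \<Rightarrow> nat set" where "Lat N Lam = {x\<in>{1..N}. Lam dvd x}"
definition Off :: "nat \<Rightarrow> nat \<Rightarrow> nat set" where "Off N Lam = {x\<in>{1..N}. \<not> Lam dvd x}"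

lemma lat_dst:
  assumes L: "0 < Lam" "Lam dvd N" and p: "p \<in> Lat N Lam" and t: "t \<in> Lat N Lam" and ne: "p \<noteq> t"
  shows "dst N p t + Lam \<le> N"
proof -
  have pr: "p \<in> {1..N}" "t \<in> {1..N}" using p t unfolding Lat_def by auto
  have d: "Lam dvd dst N p t" unfolding dst_def
    using p t L(2) unfolding Lat_def by (intro dvd_mod) auto
  have lt: "dst N p t < N" using dst_pos[OF pr ne] by blast
  obtain a where a: "dst N p t = Lam * a" using d by blast
  obtain b where b: "N = Lam * b" using L(2) by blast
  have "a < b" using lt a b L(1) by simp
  then have "Lam * a + Lam \<le> Lam * b"
    by (metis Suc_leI mult_Suc_right mult_le_mono2 add.commute)
  then show ?thesis using a b by simp
qed

lemma adj1:
  assumes L: "0 < Lam" "Lam dvd N" and p: "p \<in> Lat N Lam" and S: "S \<in> Off N Lam"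
    and d: "dst N p S < Lam" and t: "t \<in> Lat N Lam" and ne: "t \<noteq> p"
  shows "dst N t S = dst N t p + dst N p S" "dst N p t = dst N p S + dst N S t"
proof -
  have r: "p \<in> {1..N}" "t \<in> {1..N}" "S \<in> {1..N}" using p t S unfolding Lat_def Off_def by auto
  have tS: "t \<noteq> S" "p \<noteq> S" using t p S unfolding Lat_def Off_def by auto
  have "dst N t p + Lam \<le> N" using lat_dst[OF L t p ne] .
  then have "dst N t p + dst N p S < N" using d by linarith
  then show e: "dst N t S = dst N t p + dst N p S" using dst_trans[OF r(2) r(1) r(3) tS(1)] by blast
  have "dst N p t + dst N t p = N" using dst_swap[OF r(1) r(2)] ne by auto
  moreover have "dst N S t + dst N t S = N" using dst_swap[OF r(3) r(2)] tS by auto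
  ultimately show "dst N p t = dst N p S + dst N S t" using e by linarith
qed

lemma adj2:
  assumes L: "0 < Lam" "Lam dvd N" and p: "p \<in> Lat N Lam" and S: "S \<in> Off N Lam"
    and d: "dst N S p < Lam" and t: "t \<in> Lat N Lam" and ne: "t \<noteq> p"
  shows "dst N S t = dst N S p + dst N p t" "dst N t p = dst N t S + dst N S p"
proof -
  have r: "p \<in> {1..N}" "t \<in> {1..N}" "S \<in> {1..N}" using p t S unfolding Lat_def Off_def by auto
  have tS: "t \<noteq> S" "p \<noteq> S" using t p S unfolding Lat_def Off_def by auto
  have "dst N p t + Lam \<le> N" using lat_dst[OF L p t] ne by auto
  then have "dst N S p + dst N p t < N" using d by linarith
  then show e: "dst N S t = dst N S p + dst N p t" using dst_trans[OF r(3) r(1) r(2)] tS(1) by auto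
  have "dst N p t + dst N t p = N" using dst_swap[OF r(1) r(2)] ne by auto
  moreover have "dst N S t + dst N t S = N" using dst_swap[OF r(3) r(2)] tS by auto
  ultimately show "dst N t p = dst N t S + dst N S p" using e by linarith
qed

lemma gw_le1: "gw N W a \<le> 1"
proof -
  have "1 / real (card (AM N W)) \<le> 1"
    by (cases "card (AM N W) = 0") (simp_all add: divide_le_eq_1)
  then show ?thesis unfolding gw_def by simp
qed

lemma gw_nonneg: "0 \<le> gw N W a"
  unfolding gw_def by auto

lemma gw_single: "AM N W = {a} \<Longrightarrow> gw N W a = 1"
  unfolding gw_def by simp

lemma cmp_next:
  assumes L: "0 < Lam" "Lam dvd N" and s: "s \<in> Lat N Lam" and S: "S \<in> Off N Lam"
    and d: "dst N S s < Lam" and T: "T \<subseteq> Lat N Lam" "finite T" "T \<noteq> {}" and sT: "s \<notin> T"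
  shows "gw N (insert s T) s \<le> gw N (insert S T) S"
proof (cases "s \<in> AM N (insert s T)")
  case True
  have ST: "S \<notin> T" using S T unfolding Lat_def Off_def by auto
  have "AM N (insert S T) = {S}"
  proof (rule shift[OF T(2,3) ST sT _ _ True])
    fix t assume t: "t \<in> T"
    then have tl: "t \<in> Lat N Lam" "t \<noteq> s" using T sT by auto
    show "dst N S t = dst N S s + dst N s t \<and> dst N t S \<le> dst N t s"
      using adj2[OF L s S d tl] by simp
  next
    have "S \<noteq> s" using S s unfolding Lat_def Off_def by auto
    then show "0 < dst N S s" using dst_pos[of S N s] S s unfolding Lat_def Off_def by auto
  qed
  then show ?thesis using gw_le1[of N "insert s T" s] gw_single by simp
next
  case False
  then show ?thesis unfolding gw_def by (simp add: gw_def)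
qed

lemma cmp_prev:
  assumes L: "0 < Lam" "Lam dvd N" and p: "p \<in> Lat N Lam" and S: "S \<in> Off N Lam"
    and d: "dst N p S < Lam" and T: "T \<subseteq> Lat N Lam" "finite T" "T \<noteq> {}" and pT: "p \<notin> T"
  shows "gw N (insert S T) S \<le> gw N (insert p T) p"
proof (cases "S \<in> AM N (insert S T)")
  case True
  have ST: "S \<notin> T" using S T unfolding Lat_def Off_def by auto
  have "AM N (insert p T) = {p}"
  proof (rule shift[OF T(2,3) pT ST _ _ True])
    fix t assume t: "t \<in> T"
    then have tl: "t \<in> Lat N Lam" "t \<noteq> p" using T pT by auto
    show "dst N p t = dst N p S + dst N S t \<and> dst N t p \<le> dst N t S"
      using adj1[OF L p S d tl] by simp
  next
    have "S \<noteq> p" using S p unfolding Lat_def Off_def by auto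
    then show "0 < dst N p S" using dst_pos[of p N S] S p unfolding Lat_def Off_def by auto
  qed
  then show ?thesis using gw_le1[of N "insert S T" S] gw_single by simp
next
  case False
  then show ?thesis unfolding gw_def by simp
qed




lemma dom_prev:
  assumes L: "0 < Lam" "Lam dvd N" and T: "T \<subseteq> Lat N Lam" "finite T"
    and p: "p \<in> T" and S: "S \<in> Off N Lam" and d: "dst N p S < Lam"
    and SA: "S \<in> AM N (insert S T)" and t: "t \<in> T" and tp: "t \<noteq> p"
  shows "gp N T t < gp N T p"
proof -
  have ST: "S \<notin> T" using S T unfolding Lat_def Off_def by auto
  have pl: "p \<in> Lat N Lam" using p T by auto
  have tl: "t \<in> Lat N Lam" using t T by auto
  have Sr: "S \<in> {1..N}" using S unfolding Off_def by auto
  have pr: "p \<in> {1..N}" using pl unfolding Lat_def by auto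
  have pS: "p \<noteq> S" using ST p by auto
  define G where "G = gp N (insert S T) S"
  have iST: "insert S T - {S} = T" using ST by blast
  have G: "G = Min (dst N S ` T)" unfolding G_def gp_def iST by (rule refl)
  have fin1: "finite (dst N p ` (T - {p}))" using T by blast
  have ne1: "dst N p ` (T - {p}) \<noteq> {}" using t tp by blast
  have "Min (dst N p ` (T - {p})) \<in> dst N p ` (T - {p})" using fin1 ne1 by (rule Min_in)
  then obtain u where u: "u \<in> T - {p}" "gp N T p = dst N p u" unfolding gp_def by blast
  have ul: "u \<in> Lat N Lam" "u \<noteq> p" using u T by auto
  have e1: "dst N p u = dst N p S + dst N S u" using adj1[OF L pl S d ul] by simp
  have pos: "0 < dst N p S" using dst_pos[OF pr Sr pS] by simp
  have "G \<le> dst N S u" unfolding G using T u by (intro Min_le) auto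
  then have gpp: "G < gp N T p" using u e1 pos by linarith
  have "gp N (insert S T) t \<le> G" using SA t unfolding AM_def G_def by blast
  moreover have "gp N T t \<le> gp N (insert S T) t"
  proof -
    have fin2: "finite (dst N t ` (insert S T - {t}))" using T by blast
    have ne2: "dst N t ` (insert S T - {t}) \<noteq> {}" using ST t by blast
    have "Min (dst N t ` (insert S T - {t})) \<in> dst N t ` (insert S T - {t})" using fin2 ne2 by (rule Min_in)
    then obtain v where v: "v \<in> insert S T - {t}" "gp N (insert S T) t = dst N t v" unfolding gp_def by blast
    have fin3: "finite (dst N t ` (T - {t}))" using T by blast
    show ?thesis
    proof (cases "v = S")
      case True
      have "dst N t S = dst N t p + dst N p S" using adj1[OF L pl S d tl tp] by simp
      moreover have "gp N T t \<le> dst N t p" unfolding gp_def using fin3 p tp by (intro Min_le) auto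
      moreover have "gp N (insert S T) t = dst N t S" using v True by simp
      ultimately show ?thesis by linarith
    next
      case False
      then have "v \<in> T - {t}" using v by blast
      then have "gp N T t \<le> dst N t v" unfolding gp_def using fin3 by (intro Min_le) auto
      then show ?thesis using v by simp
    qed
  qed
  ultimately show ?thesis using gpp by linarith
qed

lemma uniq_prev:
  assumes L: "0 < Lam" "Lam dvd N" and T: "T \<subseteq> Lat N Lam" "finite T"
    and p1: "p1 \<in> T" and S1: "S1 \<in> Off N Lam" and d1: "dst N p1 S1 < Lam"
    and SA1: "S1 \<in> AM N (insert S1 T)"
    and p2: "p2 \<in> T" and S2: "S2 \<in> Off N Lam" and d2: "dst N p2 S2 < Lam"
    and SA2: "S2 \<in> AM N (insert S2 T)"
  shows "p1 = p2"
proof (rule ccontr)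
  assume ne: "p1 \<noteq> p2"
  have "gp N T p2 < gp N T p1" using dom_prev[OF L T p1 S1 d1 SA1 p2] ne by auto
  moreover have "gp N T p1 < gp N T p2" using dom_prev[OF L T p2 S2 d2 SA2 p1] ne by auto
  ultimately show False by linarith
qed




definition pv :: "nat \<Rightarrow> nat \<Rightarrow> nat \<Rightarrow> nat" where "pv N Lam j = (if j = 0 then N else j * Lam)"

lemma off_param:
  assumes L: "0 < Lam" "N = e * Lam"
  shows "Off N Lam = (\<lambda>(j,r). j*Lam + r) ` ({..<e} \<times> {1..<Lam})"
    "inj_on (\<lambda>(j,r). j*Lam + r) ({..<e} \<times> {1..<Lam})"
proof -
  show "Off N Lam = (\<lambda>(j,r). j*Lam + r) ` ({..<e} \<times> {1..<Lam})"
  proof (intro equalityI subsetI)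
    fix x assume x: "x \<in> Off N Lam"
    then have x1: "1 \<le> x" "x \<le> N" "\<not> Lam dvd x" unfolding Off_def by auto
    have "x \<noteq> N" using x1 L by auto
    then have xl: "x < e * Lam" using x1 L by simp
    have m: "x mod Lam \<noteq> 0" using x1 by (simp add: dvd_eq_mod_eq_0)
    have ml: "x mod Lam < Lam" using L by simp
    have d: "x div Lam < e" using xl L by (simp add: div_less_iff_less_mult)
    have "x = (x div Lam) * Lam + x mod Lam" by simp
    then show "x \<in> (\<lambda>(j,r). j*Lam + r) ` ({..<e} \<times> {1..<Lam})"
      using m ml d by (intro image_eqI[where x="(x div Lam, x mod Lam)"]) auto
  next
    fix x assume "x \<in> (\<lambda>(j,r). j*Lam + r) ` ({..<e} \<times> {1..<Lam})"
    then obtain j r where jr: "j < e" "1 \<le> r" "r < Lam" "x = j*Lam + r" by auto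
    have "x mod Lam = r" using jr by simp
    then have nd: "\<not> Lam dvd x" using jr by (simp add: dvd_eq_mod_eq_0)
    have "j * Lam + r < (j+1) * Lam" using jr by simp
    also have "\<dots> \<le> e * Lam" using jr by (intro mult_le_mono1) simp
    finally have "x \<le> N" using jr L by simp
    then show "x \<in> Off N Lam" unfolding Off_def using jr nd by simp
  qed
  show "inj_on (\<lambda>(j,r). j*Lam + r) ({..<e} \<times> {1..<Lam})"
  proof (rule inj_onI)
    fix a b assume a: "a \<in> {..<e} \<times> {1..<Lam}" and b: "b \<in> {..<e} \<times> {1..<Lam}"
      and eq: "(case a of (j, r) \<Rightarrow> j * Lam + r) = (case b of (j, r) \<Rightarrow> j * Lam + r)"
    obtain j r where ja: "a = (j,r)" by force
    obtain j' r' where jb: "b = (j',r')" by force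
    have e: "j * Lam + r = j' * Lam + r'" using eq ja jb by simp
    have r: "r < Lam" "r' < Lam" using a b ja jb by auto
    have "(j * Lam + r) mod Lam = r" "(j' * Lam + r') mod Lam = r'" using r by simp_all
    then have rr: "r = r'" using e by simp
    have "(j * Lam + r) div Lam = j" "(j' * Lam + r') div Lam = j'" using r L by simp_all
    then have "j = j'" using e by simp
    then show "a = b" using ja jb rr by simp
  qed
qed

lemma lat_nx:
  assumes L: "0 < Lam" "N = e * Lam"
  shows "Lat N Lam = (\<lambda>j. (j+1)*Lam) ` {..<e}" "inj_on (\<lambda>j. (j+1)*Lam) {..<e}"
proof -
  show "inj_on (\<lambda>j. (j+1)*Lam) {..<e}" using L by (intro inj_onI) simp
  show "Lat N Lam = (\<lambda>j. (j+1)*Lam) ` {..<e}"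
  proof (intro equalityI subsetI)
    fix x assume x: "x \<in> Lat N Lam"
    then obtain k where k: "x = Lam * k" "1 \<le> x" "x \<le> N" unfolding Lat_def by auto
    have "k \<ge> 1" using k by (cases k) auto
    moreover have "k \<le> e" using k L by simp
    ultimately show "x \<in> (\<lambda>j. (j+1)*Lam) ` {..<e}"
      using k by (intro image_eqI[where x="k - 1"]) (auto simp: mult.commute)
  next
    fix x assume "x \<in> (\<lambda>j. (j+1)*Lam) ` {..<e}"
    then obtain j where j: "j < e" "x = (j+1)*Lam" by auto
    have "(j+1)*Lam \<le> e*Lam" using j by (intro mult_le_mono1) simp
    then have "x \<le> N" using j L by simp
    moreover have "1 \<le> x" using j L by simp
    ultimately show "x \<in> Lat N Lam" unfolding Lat_def using j by simp
  qed
qed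

lemma lat_pv:
  assumes L: "0 < Lam" "N = e * Lam"
  shows "Lat N Lam = pv N Lam ` {..<e}" "inj_on (pv N Lam) {..<e}"
proof -
  show "Lat N Lam = pv N Lam ` {..<e}"
  proof (intro equalityI subsetI)
    fix x assume x: "x \<in> Lat N Lam"
    then obtain k where k: "x = Lam * k" "1 \<le> x" "x \<le> N" unfolding Lat_def by auto
    have k1: "k \<ge> 1" using k by (cases k) auto
    have ke: "k \<le> e" using k L by simp
    show "x \<in> pv N Lam ` {..<e}"
    proof (cases "k = e")
      case True
      then show ?thesis using k L k1 by (intro image_eqI[where x=0]) (auto simp: pv_def mult.commute)
    next
      case False
      then show ?thesis using k L k1 ke by (intro image_eqI[where x=k]) (auto simp: pv_def mult.commute)
    qed
  next
    fix x assume "x \<in> pv N Lam ` {..<e}"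
    then obtain j where j: "j < e" "x = pv N Lam j" by auto
    show "x \<in> Lat N Lam"
    proof (cases "j = 0")
      case True
      then show ?thesis using j L unfolding Lat_def pv_def by auto
    next
      case False
      have "x \<le> N" using j L False unfolding pv_def by simp
      moreover have "1 \<le> x" using j L False unfolding pv_def by simp
      ultimately show ?thesis unfolding Lat_def using j False by (simp add: pv_def)
    qed
  qed
  show "inj_on (pv N Lam) {..<e}"
  proof (rule inj_onI)
    fix a b assume a: "a \<in> {..<e}" and b: "b \<in> {..<e}" and eq: "pv N Lam a = pv N Lam b"
    have "a * Lam < N" if "a < e" for a using that L by simp
    then show "a = b" using a b eq L unfolding pv_def by (auto split: if_splits)
  qed
qed

lemma dst_nx:
  assumes L: "0 < Lam" "N = e * Lam" and j: "j < e" and r: "1 \<le> r" "r < Lam"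
  shows "dst N (j*Lam + r) ((j+1)*Lam) < Lam"
proof -
  have "(j+1)*Lam \<le> e*Lam" using j by (intro mult_le_mono1) simp
  then have le: "(j+1)*Lam \<le> N" using L by simp
  have "j*Lam + r \<in> {1..N}" using le r by simp
  moreover have "(j+1)*Lam \<in> {1..N}" using le L by simp
  ultimately have "dst N (j*Lam + r) ((j+1)*Lam) = (j+1)*Lam - (j*Lam + r)"
    using r by (simp add: dst_eq)
  then show ?thesis using r by simp
qed

lemma dst_pv:
  assumes L: "0 < Lam" "N = e * Lam" and j: "j < e" and r: "1 \<le> r" "r < Lam"
  shows "dst N (pv N Lam j) (j*Lam + r) < Lam"
proof -
  have "(j+1)*Lam \<le> e*Lam" using j by (intro mult_le_mono1) simp
  then have le: "(j+1)*Lam \<le> N" using L by simp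
  have s: "j*Lam + r \<in> {1..N}" using le r by simp
  show ?thesis
  proof (cases "j = 0")
    case True
    have "N \<in> {1..N}" using le L j by simp
    then have "dst N N r = r + N - N" using s True r le by (simp add: dst_eq)
    then show ?thesis using True r by (simp add: pv_def)
  next
    case False
    have "j*Lam \<in> {1..N}" using le L False j by simp
    then have "dst N (j*Lam) (j*Lam + r) = r" using s by (simp add: dst_eq)
    then show ?thesis using False r by (simp add: pv_def)
  qed
qed




lemma Sjr_off: "0 < Lam \<Longrightarrow> N = e * Lam \<Longrightarrow> j < e \<Longrightarrow> 1 \<le> r \<Longrightarrow> r < Lam \<Longrightarrow> j*Lam + r \<in> Off N Lam"
  using off_param(1)[of Lam N e] by auto

lemma nx_lat: "0 < Lam \<Longrightarrow> N = e * Lam \<Longrightarrow> j < e \<Longrightarrow> (j+1)*Lam \<in> Lat N Lam"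
  using lat_nx(1)[of Lam N e] by auto

lemma pv_lat: "0 < Lam \<Longrightarrow> N = e * Lam \<Longrightarrow> j < e \<Longrightarrow> pv N Lam j \<in> Lat N Lam"
  using lat_pv(1)[of Lam N e] by auto

lemma sum_off:
  assumes L: "0 < Lam" "N = e * Lam"
  shows "(\<Sum>S\<in>Off N Lam. f S) = (\<Sum>j<e. \<Sum>r\<in>{1..<Lam}. f (j*Lam + r))"
proof -
  have "(\<Sum>S\<in>Off N Lam. f S) = (\<Sum>x\<in>{..<e} \<times> {1..<Lam}. f ((\<lambda>(j,r). j*Lam + r) x))"
    unfolding off_param(1)[OF L] using sum.reindex[OF off_param(2)[OF L], of f] by (simp add: comp_def)
  also have "\<dots> = (\<Sum>(j,r)\<in>{..<e} \<times> {1..<Lam}. f (j*Lam + r))"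
    by (rule sum.cong) auto
  also have "\<dots> = (\<Sum>j<e. \<Sum>r\<in>{1..<Lam}. f (j*Lam + r))"
    by (rule sum.cartesian_product[symmetric])
  finally show ?thesis .
qed

lemma sum_lat_nx:
  assumes L: "0 < Lam" "N = e * Lam"
  shows "(\<Sum>s\<in>Lat N Lam. f s) = (\<Sum>j<e. f ((j+1)*Lam))"
  unfolding lat_nx(1)[OF L] using lat_nx(2)[OF L] by (simp add: sum.reindex)

lemma sum_lat_pv:
  assumes L: "0 < Lam" "N = e * Lam"
  shows "(\<Sum>s\<in>Lat N Lam. f s) = (\<Sum>j<e. f (pv N Lam j))"
  unfolding lat_pv(1)[OF L] using lat_pv(2)[OF L] by (simp add: sum.reindex)

lemma finite_Lat: "finite (Lat N Lam)" unfolding Lat_def by simp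
lemma finite_Off: "finite (Off N Lam)" unfolding Off_def by simp

lemma sum_minus_T:
  "(\<Sum>s\<in>Lat N Lam - T. g s) = (\<Sum>s\<in>Lat N Lam. if s \<notin> T then g s else 0)"
proof -
  have "Lat N Lam - T = {s\<in>Lat N Lam. s \<notin> T}" by blast
  then show ?thesis using sum.inter_filter[OF finite_Lat, of g N Lam "\<lambda>s. s \<notin> T"] by simp
qed

lemma card_r: "card {1..<Lam} = Lam - 1" by simp

lemma lower_T:
  assumes L: "0 < Lam" "N = e * Lam" "Lam dvd N"
    and T: "T \<subseteq> Lat N Lam" "finite T" "T \<noteq> {}"
  shows "real (Lam - 1) * (\<Sum>s\<in>Lat N Lam - T. gw N (insert s T) s)
         \<le> (\<Sum>S\<in>Off N Lam. gw N (insert S T) S)"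
proof -
  define A where "A j = (if (j+1)*Lam \<notin> T then gw N (insert ((j+1)*Lam) T) ((j+1)*Lam) else 0)" for j
  have "(\<Sum>s\<in>Lat N Lam - T. gw N (insert s T) s) = (\<Sum>j<e. A j)"
    unfolding sum_minus_T sum_lat_nx[OF L(1,2)] A_def by (rule refl)
  then have "real (Lam - 1) * (\<Sum>s\<in>Lat N Lam - T. gw N (insert s T) s) = (\<Sum>j<e. \<Sum>r\<in>{1..<Lam}. A j)"
    by (simp add: sum_distrib_left)
  also have "\<dots> \<le> (\<Sum>j<e. \<Sum>r\<in>{1..<Lam}. gw N (insert (j*Lam + r) T) (j*Lam + r))"
  proof (intro sum_mono)
    fix j r assume j: "j \<in> {..<e}" and r: "r \<in> {1..<Lam}"
    show "A j \<le> gw N (insert (j*Lam + r) T) (j*Lam + r)"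
    proof (cases "(j+1)*Lam \<in> T")
      case True
      then show ?thesis unfolding A_def using gw_nonneg by simp
    next
      case False
      have "gw N (insert ((j+1)*Lam) T) ((j+1)*Lam) \<le> gw N (insert (j*Lam + r) T) (j*Lam + r)"
        using cmp_next[OF L(1,3) nx_lat[OF L(1,2)] Sjr_off[OF L(1,2)] dst_nx[OF L(1,2)] T False] j r
        by simp
      then show ?thesis unfolding A_def using False by simp
    qed
  qed
  also have "\<dots> = (\<Sum>S\<in>Off N Lam. gw N (insert S T) S)"
    by (rule sum_off[OF L(1,2), symmetric])
  finally show ?thesis .
qed




lemma gw_pos_AM: "gw N W a \<noteq> 0 \<Longrightarrow> a \<in> AM N W"
  unfolding gw_def by (cases "a \<in> AM N W") simp_all

lemma B_bound:
  assumes L: "0 < Lam" "N = e * Lam" "Lam dvd N"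
    and T: "T \<subseteq> Lat N Lam" "finite T"
  shows "(\<Sum>j<e. \<Sum>r\<in>{1..<Lam}. if pv N Lam j \<in> T then gw N (insert (j*Lam + r) T) (j*Lam + r) else 0)
          \<le> real (Lam - 1)"
proof -
  define h where "h j = (\<Sum>r\<in>{1..<Lam}. if pv N Lam j \<in> T then gw N (insert (j*Lam + r) T) (j*Lam + r) else 0)" for j
  have hle: "h j \<le> real (Lam - 1)" for j
  proof -
    have "h j \<le> (\<Sum>r\<in>{1..<Lam}. (1::real))" unfolding h_def
      by (intro sum_mono) (simp add: gw_le1)
    then show ?thesis by simp
  qed
  show ?thesis
  proof (cases "\<exists>j0<e. \<exists>r0\<in>{1..<Lam}. pv N Lam j0 \<in> T \<and> j0*Lam + r0 \<in> AM N (insert (j0*Lam + r0) T)")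
    case True
    then obtain j0 r0 where j0: "j0 < e" "r0 \<in> {1..<Lam}" "pv N Lam j0 \<in> T"
      "j0*Lam + r0 \<in> AM N (insert (j0*Lam + r0) T)" by blast
    have z: "h j = 0" if j: "j \<in> {..<e} - {j0}" for j
      unfolding h_def
    proof (intro sum.neutral ballI)
      fix r assume r: "r \<in> {1..<Lam}"
      show "(if pv N Lam j \<in> T then gw N (insert (j*Lam + r) T) (j*Lam + r) else 0) = 0"
      proof (rule ccontr)
        assume ne: "(if pv N Lam j \<in> T then gw N (insert (j*Lam + r) T) (j*Lam + r) else 0) \<noteq> 0"
        then have pj: "pv N Lam j \<in> T" by (cases "pv N Lam j \<in> T") simp_all
        then have "gw N (insert (j*Lam + r) T) (j*Lam + r) \<noteq> 0" using ne by simp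
        then have am: "j*Lam + r \<in> AM N (insert (j*Lam + r) T)" by (rule gw_pos_AM)
        have jl: "j < e" using j by simp
        have "pv N Lam j0 = pv N Lam j"
          using uniq_prev[OF L(1,3) T j0(3) Sjr_off[OF L(1,2) j0(1)] dst_pv[OF L(1,2) j0(1)] _ pj
             Sjr_off[OF L(1,2) jl] dst_pv[OF L(1,2) jl]] j0 r am by auto
        then have "j0 = j" using lat_pv(2)[OF L(1,2)] j0(1) jl by (simp add: inj_on_def)
        then show False using j by simp
      qed
    qed
    have "(\<Sum>j<e. h j) = h j0 + (\<Sum>j\<in>{..<e} - {j0}. h j)"
      using j0(1) by (intro sum.remove) auto
    also have "(\<Sum>j\<in>{..<e} - {j0}. h j) = 0" using z by (intro sum.neutral) blast
    finally have "(\<Sum>j<e. h j) = h j0" by simp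
    then show ?thesis using hle[of j0] unfolding h_def by simp
  next
    case False
    have "(\<Sum>j<e. h j) = 0"
    proof (intro sum.neutral ballI)
      fix j assume j: "j \<in> {..<e}"
      show "h j = 0" unfolding h_def
      proof (intro sum.neutral ballI)
        fix r assume r: "r \<in> {1..<Lam}"
        show "(if pv N Lam j \<in> T then gw N (insert (j*Lam + r) T) (j*Lam + r) else 0) = 0"
        proof (cases "pv N Lam j \<in> T")
          case True
          then have "j*Lam + r \<notin> AM N (insert (j*Lam + r) T)" using False j r by blast
          then show ?thesis unfolding gw_def by simp
        qed simp
      qed
    qed
    then show ?thesis unfolding h_def by simp
  qed
qed

lemma upper_T:
  assumes L: "0 < Lam" "N = e * Lam" "Lam dvd N"
    and T: "T \<subseteq> Lat N Lam" "finite T" "T \<noteq> {}"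
  shows "(\<Sum>S\<in>Off N Lam. gw N (insert S T) S)
         \<le> real (Lam - 1) * (\<Sum>s\<in>Lat N Lam - T. gw N (insert s T) s) + real (Lam - 1)"
proof -
  define A where "A j = (if pv N Lam j \<notin> T then gw N (insert (pv N Lam j) T) (pv N Lam j) else 0)" for j
  define B where "B j r = (if pv N Lam j \<in> T then gw N (insert (j*Lam + r) T) (j*Lam + r) else 0)" for j r
  have "(\<Sum>S\<in>Off N Lam. gw N (insert S T) S) = (\<Sum>j<e. \<Sum>r\<in>{1..<Lam}. gw N (insert (j*Lam + r) T) (j*Lam + r))"
    by (rule sum_off[OF L(1,2)])
  also have "\<dots> \<le> (\<Sum>j<e. \<Sum>r\<in>{1..<Lam}. A j + B j r)"
  proof (intro sum_mono)
    fix j r assume j: "j \<in> {..<e}" and r: "r \<in> {1..<Lam}"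
    show "gw N (insert (j*Lam + r) T) (j*Lam + r) \<le> A j + B j r"
    proof (cases "pv N Lam j \<in> T")
      case True
      then show ?thesis unfolding A_def B_def by simp
    next
      case False
      have "gw N (insert (j*Lam + r) T) (j*Lam + r) \<le> gw N (insert (pv N Lam j) T) (pv N Lam j)"
        using cmp_prev[OF L(1,3) pv_lat[OF L(1,2)] Sjr_off[OF L(1,2)] dst_pv[OF L(1,2)] T False] j r
        by simp
      then show ?thesis unfolding A_def B_def using False by simp
    qed
  qed
  also have "\<dots> = (\<Sum>j<e. \<Sum>r\<in>{1..<Lam}. A j) + (\<Sum>j<e. \<Sum>r\<in>{1..<Lam}. B j r)"
    by (simp add: sum.distrib)
  also have "(\<Sum>j<e. \<Sum>r\<in>{1..<Lam}. A j) = real (Lam - 1) * (\<Sum>j<e. A j)"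
    by (simp add: sum_distrib_left)
  also have "(\<Sum>j<e. A j) = (\<Sum>s\<in>Lat N Lam - T. gw N (insert s T) s)"
    unfolding sum_minus_T sum_lat_pv[OF L(1,2)] A_def by (rule refl)
  also have "(\<Sum>j<e. \<Sum>r\<in>{1..<Lam}. B j r) \<le> real (Lam - 1)"
    unfolding B_def by (rule B_bound[OF L T(1,2)])
  finally show ?thesis by simp
qed




definition R :: "nat \<Rightarrow> nat \<Rightarrow> nat \<Rightarrow> nat" where "R N k x = (x + k - 1) mod N + 1"

lemma R_range: "0 < N \<Longrightarrow> R N k x \<in> {1..N}"
  unfolding R_def by (simp add: Suc_leI)

lemma R_comp: "0 < N \<Longrightarrow> x \<in> {1..N} \<Longrightarrow> R N j (R N k x) = R N (j + k) x"
proof -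
  assume N: "0 < N" and x: "x \<in> {1..N}"
  have "R N j (R N k x) = ((x + k - 1) mod N + j) mod N + 1" unfolding R_def by simp
  also have "\<dots> = (x + k - 1 + j) mod N + 1" by (simp add: mod_add_left_eq)
  also have "x + k - 1 + j = x + (j + k) - 1" using x by simp
  finally show ?thesis unfolding R_def by simp
qed

lemma R_id: "x \<in> {1..N} \<Longrightarrow> R N N x = x"
proof -
  assume x: "x \<in> {1..N}"
  have e: "x + N - 1 = (x - 1) + N" using x by simp
  have "x - 1 < x" using x by simp
  then have l: "x - 1 < N" using x by simp
  have "(x + N - 1) mod N = x - 1" unfolding e using l by (metis mod_add_self2 mod_less)
  then show ?thesis unfolding R_def using x by simp
qed

lemma R_inv: "0 < N \<Longrightarrow> t \<le> N \<Longrightarrow> x \<in> {1..N} \<Longrightarrow> R N (N - t) (R N t x) = x"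
  by (simp add: R_comp R_id)

lemma R_inv2: "0 < N \<Longrightarrow> t \<le> N \<Longrightarrow> x \<in> {1..N} \<Longrightarrow> R N t (R N (N - t) x) = x"
proof -
  assume a: "0 < N" "t \<le> N" "x \<in> {1..N}"
  then have "R N t (R N (N - t) x) = R N (t + (N - t)) x" by (simp add: R_comp)
  also have "t + (N - t) = N" using a by simp
  finally show ?thesis using R_id[OF a(3)] by simp
qed

lemma R_N: "t \<in> {1..N} \<Longrightarrow> R N t N = t"
proof -
  assume t: "t \<in> {1..N}"
  have e: "N + t - 1 = (t - 1) + N" using t by simp
  have "t - 1 < t" using t by simp
  then have l: "t - 1 < N" using t by simp
  have "(N + t - 1) mod N = t - 1" unfolding e using l by (metis mod_add_self2 mod_less)
  then show ?thesis unfolding R_def using t by simp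
qed

lemma R_dvd_eq: "x \<in> {1..N} \<Longrightarrow> R N k x + ((x + k - 1) div N) * N = x + k"
proof -
  assume x: "x \<in> {1..N}"
  have "(x + k - 1) div N * N + (x + k - 1) mod N = x + k - 1" by (rule div_mult_mod_eq)
  then show ?thesis unfolding R_def using x by simp
qed

lemma R_lat: assumes "Lam dvd N" "Lam dvd k" "0 < N" "x \<in> {1..N}"
  shows "Lam dvd R N k x \<longleftrightarrow> Lam dvd x"
proof -
  have e: "R N k x + ((x + k - 1) div N) * N = x + k" using R_dvd_eq[OF assms(4)] .
  have d: "Lam dvd ((x + k - 1) div N) * N" using assms(1) by simp
  show ?thesis
  proof
    assume "Lam dvd R N k x"
    then have "Lam dvd x + k" using e d by (metis dvd_add)
    then show "Lam dvd x" using assms(2) by (simp add: dvd_add_left_iff)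
  next
    assume "Lam dvd x"
    then have "Lam dvd x + k" using assms(2) by simp
    then show "Lam dvd R N k x" using e d by (metis dvd_add_left_iff)
  qed
qed

lemma dst_int: "x \<in> {1..N} \<Longrightarrow> a \<in> {1..N} \<Longrightarrow> int (dst N x a) = (int a - int x) mod int N"
proof -
  assume x: "x \<in> {1..N}" and a: "a \<in> {1..N}"
  have "int (dst N x a) = int (a + N - x) mod int N" unfolding dst_def by (simp add: of_nat_mod)
  also have "int (a + N - x) = (int a - int x) + int N" using x by simp
  finally show ?thesis by simp
qed

lemma R_int: "x \<in> {1..N} \<Longrightarrow> int (R N k x) = (int x + int k - 1) mod int N + 1"
proof -
  assume x: "x \<in> {1..N}"
  have "int (R N k x) = int ((x + k - 1) mod N) + 1" unfolding R_def by simp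
  also have "int ((x + k - 1) mod N) = int (x + k - 1) mod int N" by (simp add: of_nat_mod)
  also have "int (x + k - 1) = int x + int k - 1" using x by simp
  finally show ?thesis .
qed

lemma dst_R: assumes N: "0 < N" and x: "x \<in> {1..N}" and a: "a \<in> {1..N}"
  shows "dst N (R N k x) (R N k a) = dst N x a"
proof -
  have "int (dst N (R N k x) (R N k a)) = (int (R N k a) - int (R N k x)) mod int N"
    using dst_int[OF R_range[OF N] R_range[OF N]] by simp
  also have "\<dots> = ((int a + int k - 1) mod int N - (int x + int k - 1) mod int N) mod int N"
    using R_int[OF x] R_int[OF a] by simp
  also have "\<dots> = ((int a + int k - 1) - (int x + int k - 1)) mod int N" by (rule mod_diff_eq)
  also have "\<dots> = (int a - int x) mod int N" by simp
  also have "\<dots> = int (dst N x a)" using dst_int[OF x a] by simp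
  finally show ?thesis by simp
qed

lemma R_inj: "0 < N \<Longrightarrow> k \<le> N \<Longrightarrow> inj_on (R N k) {1..N}"
  by (rule inj_on_inverseI[where g="R N (N - k)"]) (simp add: R_inv)

lemma gp_R: assumes N: "0 < N" "k \<le> N" and W: "W \<subseteq> {1..N}" and x: "x \<in> W"
  shows "gp N (R N k ` W) (R N k x) = gp N W x"
proof -
  have inj: "inj_on (R N k) {1..N}" by (rule R_inj[OF N])
  have "R N k ` (W - {x}) = R N k ` W - R N k ` {x}"
    by (rule inj_on_image_set_diff[OF inj]) (use W x in auto)
  then have "R N k ` W - {R N k x} = R N k ` (W - {x})" by simp
  then have "dst N (R N k x) ` (R N k ` W - {R N k x}) = (\<lambda>a. dst N (R N k x) (R N k a)) ` (W - {x})"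
    by (simp add: image_image)
  also have "\<dots> = dst N x ` (W - {x})"
  proof (rule image_cong[OF refl])
    fix a assume "a \<in> W - {x}"
    then have "a \<in> {1..N}" "x \<in> {1..N}" using W x by auto
    then show "dst N (R N k x) (R N k a) = dst N x a" using dst_R[OF N(1)] by simp
  qed
  finally show ?thesis unfolding gp_def by simp
qed

lemma AM_R: assumes N: "0 < N" "k \<le> N" and W: "W \<subseteq> {1..N}"
  shows "AM N (R N k ` W) = R N k ` AM N W"
proof (intro equalityI subsetI)
  fix y assume y: "y \<in> AM N (R N k ` W)"
  then obtain x where x: "x \<in> W" "y = R N k x" unfolding AM_def by blast
  have "gp N W z \<le> gp N W x" if z: "z \<in> W" for z
  proof -
    from y have "\<forall>u\<in>R N k ` W. gp N (R N k ` W) u \<le> gp N (R N k ` W) y" unfolding AM_def by blast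
    then have "gp N (R N k ` W) (R N k z) \<le> gp N (R N k ` W) y" using z by blast
    then have "gp N (R N k ` W) (R N k z) \<le> gp N (R N k ` W) (R N k x)" using x(2) by simp
    then show ?thesis using gp_R[OF N W] x z by simp
  qed
  then have "x \<in> AM N W" unfolding AM_def using x by blast
  then show "y \<in> R N k ` AM N W" using x by blast
next
  fix y assume "y \<in> R N k ` AM N W"
  then obtain x where x: "x \<in> AM N W" "y = R N k x" by blast
  have xW: "x \<in> W" using x AM_sub by blast
  have "gp N (R N k ` W) z \<le> gp N (R N k ` W) y" if z: "z \<in> R N k ` W" for z
  proof -
    obtain u where u: "u \<in> W" "z = R N k u" using z by blast
    have "gp N W u \<le> gp N W x" using x u unfolding AM_def by blast
    then show ?thesis using gp_R[OF N W] u xW x by simp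
  qed
  then show "y \<in> AM N (R N k ` W)" unfolding AM_def using x xW by blast
qed

lemma gw_R: assumes N: "0 < N" "k \<le> N" and W: "W \<subseteq> {1..N}" and a: "a \<in> {1..N}"
  shows "gw N (R N k ` W) (R N k a) = gw N W a"
proof -
  have inj: "inj_on (R N k) {1..N}" by (rule R_inj[OF N])
  have sub: "AM N W \<subseteq> {1..N}" using AM_sub W by blast
  have c: "card (R N k ` AM N W) = card (AM N W)" using inj sub by (meson card_image inj_on_subset)
  have m: "R N k a \<in> R N k ` AM N W \<longleftrightarrow> a \<in> AM N W" by (rule inj_on_image_mem_iff[OF inj a sub])
  show ?thesis unfolding gw_def AM_R[OF N W] c m by (rule refl)
qed




definition Fam :: "nat \<Rightarrow> nat \<Rightarrow> nat \<Rightarrow> nat \<Rightarrow> nat set set" where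
  "Fam N Lam m a = {W. W \<subseteq> Lat N Lam \<and> card W = m \<and> a \<in> W}"

lemma Lat_sub: "Lat N Lam \<subseteq> {1..N}" unfolding Lat_def by blast
lemma Off_sub: "Off N Lam \<subseteq> {1..N}" unfolding Off_def by blast

lemma R_maps:
  assumes L: "0 < Lam" "Lam dvd N" "0 < N" and k: "Lam dvd k"
  shows "x \<in> Lat N Lam \<Longrightarrow> R N k x \<in> Lat N Lam" "x \<in> Off N Lam \<Longrightarrow> R N k x \<in> Off N Lam"
proof -
  assume x: "x \<in> Lat N Lam"
  then have "x \<in> {1..N}" "Lam dvd x" unfolding Lat_def by auto
  then show "R N k x \<in> Lat N Lam" using R_lat[OF L(2) k L(3)] R_range[OF L(3)] unfolding Lat_def by auto
next
  assume x: "x \<in> Off N Lam"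
  then have "x \<in> {1..N}" "\<not> Lam dvd x" unfolding Off_def by auto
  then show "R N k x \<in> Off N Lam" using R_lat[OF L(2) k L(3)] R_range[OF L(3)] unfolding Off_def by auto
qed

lemma t_facts:
  assumes L: "0 < Lam" "Lam dvd N" "0 < N" and t: "t \<in> Lat N Lam"
  shows "Lam dvd t" "Lam dvd (N - t)" "t \<le> N" "N - t \<le> N" "t \<in> {1..N}"
  using t L unfolding Lat_def by (auto simp: dvd_diff_nat)

lemma bij_off:
  assumes L: "0 < Lam" "Lam dvd N" "0 < N" and t: "t \<in> Lat N Lam"
  shows "bij_betw (R N t) (Off N Lam) (Off N Lam)"
proof (rule bij_betw_byWitness[where f'="R N (N - t)"])
  note tf = t_facts[OF L t]
  show "\<forall>a\<in>Off N Lam. R N (N - t) (R N t a) = a" using R_inv[OF L(3) tf(3)] Off_sub by blast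
  show "\<forall>a\<in>Off N Lam. R N t (R N (N - t) a) = a" using R_inv2[OF L(3) tf(3)] Off_sub by blast
  show "R N t ` Off N Lam \<subseteq> Off N Lam" using R_maps(2)[OF L tf(1)] by blast
  show "R N (N - t) ` Off N Lam \<subseteq> Off N Lam" using R_maps(2)[OF L tf(2)] by blast
qed

lemma bij_fam:
  assumes L: "0 < Lam" "Lam dvd N" "0 < N" and t: "t \<in> Lat N Lam"
  shows "bij_betw ((`) (R N t)) (Fam N Lam m N) (Fam N Lam m t)"
proof (rule bij_betw_byWitness[where f'="(`) (R N (N - t))"])
  note tf = t_facts[OF L t]
  have inj1: "inj_on (R N t) {1..N}" by (rule R_inj[OF L(3) tf(3)])
  have inj2: "inj_on (R N (N - t)) {1..N}" by (rule R_inj[OF L(3) tf(4)])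
  have NL: "N \<in> Lat N Lam" unfolding Lat_def using L by auto
  show "\<forall>W\<in>Fam N Lam m N. R N (N - t) ` R N t ` W = W"
  proof
    fix W assume "W \<in> Fam N Lam m N"
    then have "W \<subseteq> {1..N}" unfolding Fam_def using Lat_sub by blast
    then show "R N (N - t) ` R N t ` W = W" using R_inv[OF L(3) tf(3)] by (simp add: image_image subset_iff)
  qed
  show "\<forall>W\<in>Fam N Lam m t. R N t ` R N (N - t) ` W = W"
  proof
    fix W assume "W \<in> Fam N Lam m t"
    then have "W \<subseteq> {1..N}" unfolding Fam_def using Lat_sub by blast
    then show "R N t ` R N (N - t) ` W = W" using R_inv2[OF L(3) tf(3)] by (simp add: image_image subset_iff)
  qed
  show "(`) (R N t) ` Fam N Lam m N \<subseteq> Fam N Lam m t"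
  proof
    fix V assume "V \<in> (`) (R N t) ` Fam N Lam m N"
    then obtain W where W: "W \<in> Fam N Lam m N" "V = R N t ` W" by blast
    have Ws: "W \<subseteq> Lat N Lam" "card W = m" "N \<in> W" using W unfolding Fam_def by auto
    have "W \<subseteq> {1..N}" using Ws Lat_sub by blast
    then have "card V = m" using W Ws inj1 by (simp add: card_image inj_on_subset)
    moreover have "V \<subseteq> Lat N Lam" using W Ws R_maps(1)[OF L tf(1)] by blast
    moreover have "t \<in> V" using W Ws R_N[OF tf(5)] by force
    ultimately show "V \<in> Fam N Lam m t" unfolding Fam_def by blast
  qed
  show "(`) (R N (N - t)) ` Fam N Lam m t \<subseteq> Fam N Lam m N"
  proof
    fix V assume "V \<in> (`) (R N (N - t)) ` Fam N Lam m t"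
    then obtain W where W: "W \<in> Fam N Lam m t" "V = R N (N - t) ` W" by blast
    have Ws: "W \<subseteq> Lat N Lam" "card W = m" "t \<in> W" using W unfolding Fam_def by auto
    have "W \<subseteq> {1..N}" using Ws Lat_sub by blast
    then have "card V = m" using W Ws inj2 by (simp add: card_image inj_on_subset)
    moreover have "V \<subseteq> Lat N Lam" using W Ws R_maps(1)[OF L tf(2)] by blast
    moreover have "R N (N - t) t = N"
    proof -
      have "R N (N - t) t = R N (N - t) (R N t N)" using R_N[OF tf(5)] by simp
      also have "\<dots> = N" using R_inv[OF L(3) tf(3)] L(3) by simp
      finally show ?thesis .
    qed
    then have "N \<in> V" using W Ws by force
    ultimately show "V \<in> Fam N Lam m N" unfolding Fam_def by blast
  qed
qed

lemma rot_lat: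
  assumes L: "0 < Lam" "Lam dvd N" "0 < N" and t: "t \<in> Lat N Lam"
  shows "(\<Sum>W\<in>Fam N Lam m t. gw N W t) = (\<Sum>W\<in>Fam N Lam m N. gw N W N)"
proof -
  note tf = t_facts[OF L t]
  have "(\<Sum>W\<in>Fam N Lam m t. gw N W t) = (\<Sum>W\<in>Fam N Lam m N. gw N (R N t ` W) t)"
    using sum.reindex_bij_betw[OF bij_fam[OF L t], of "\<lambda>W. gw N W t"] by simp
  also have "\<dots> = (\<Sum>W\<in>Fam N Lam m N. gw N W N)"
  proof (rule sum.cong[OF refl])
    fix W assume "W \<in> Fam N Lam m N"
    then have W: "W \<subseteq> {1..N}" unfolding Fam_def using Lat_sub by blast
    have "gw N (R N t ` W) (R N t N) = gw N W N" using gw_R[OF L(3) tf(3) W] L(3) by simp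
    then show "gw N (R N t ` W) t = gw N W N" using R_N[OF tf(5)] by simp
  qed
  finally show ?thesis .
qed

lemma rot_off:
  assumes L: "0 < Lam" "Lam dvd N" "0 < N" and t: "t \<in> Lat N Lam"
  shows "(\<Sum>S\<in>Off N Lam. \<Sum>T\<in>Fam N Lam m t. gw N (insert S T) t)
       = (\<Sum>S\<in>Off N Lam. \<Sum>T\<in>Fam N Lam m N. gw N (insert S T) N)"
proof -
  note tf = t_facts[OF L t]
  have "(\<Sum>S\<in>Off N Lam. \<Sum>T\<in>Fam N Lam m t. gw N (insert S T) t)
      = (\<Sum>S\<in>Off N Lam. \<Sum>T\<in>Fam N Lam m t. gw N (insert (R N t S) T) t)"
    using sum.reindex_bij_betw[OF bij_off[OF L t], of "\<lambda>S. \<Sum>T\<in>Fam N Lam m t. gw N (insert S T) t"] by simp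
  also have "\<dots> = (\<Sum>S\<in>Off N Lam. \<Sum>T\<in>Fam N Lam m N. gw N (insert (R N t S) (R N t ` T)) t)"
  proof (rule sum.cong[OF refl])
    fix S assume "S \<in> Off N Lam"
    show "(\<Sum>T\<in>Fam N Lam m t. gw N (insert (R N t S) T) t) = (\<Sum>T\<in>Fam N Lam m N. gw N (insert (R N t S) (R N t ` T)) t)"
      using sum.reindex_bij_betw[OF bij_fam[OF L t], of "\<lambda>T. gw N (insert (R N t S) T) t"] by simp
  qed
  also have "\<dots> = (\<Sum>S\<in>Off N Lam. \<Sum>T\<in>Fam N Lam m N. gw N (insert S T) N)"
  proof (intro sum.cong[OF refl])
    fix S T assume S: "S \<in> Off N Lam" and T: "T \<in> Fam N Lam m N"
    have W: "insert S T \<subseteq> {1..N}" using S T Off_sub Lat_sub unfolding Fam_def by blast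
    have "gw N (R N t ` insert S T) (R N t N) = gw N (insert S T) N" using gw_R[OF L(3) tf(3) W] L(3) by simp
    then show "gw N (insert (R N t S) (R N t ` T)) t = gw N (insert S T) N" using R_N[OF tf(5)] by simp
  qed
  finally show ?thesis .
qed

lemma gw_sum1: assumes "finite W" "W \<noteq> {}" shows "(\<Sum>a\<in>W. gw N W a) = 1"
proof -
  have ne: "AM N W \<noteq> {}" using AM_ne[OF assms] .
  have fin: "finite (AM N W)" using AM_sub assms(1) by (rule finite_subset)
  have c: "card (AM N W) \<noteq> 0" using ne fin by simp
  have "(\<Sum>a\<in>W. gw N W a) = (\<Sum>a\<in>{a\<in>W. a \<in> AM N W}. 1 / real (card (AM N W)))"
    unfolding gw_def using sum.inter_filter[OF assms(1), of "\<lambda>a. 1 / real (card (AM N W))" "\<lambda>a. a \<in> AM N W"] by simp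
  also have "{a\<in>W. a \<in> AM N W} = AM N W" using AM_sub by blast
  finally show ?thesis using c by simp
qed




definition Bs :: "nat \<Rightarrow> nat \<Rightarrow> nat \<Rightarrow> nat set set" where
  "Bs N Lam m = {W. W \<subseteq> Lat N Lam \<and> card W = m}"

lemma finite_Bs: "finite (Bs N Lam m)"
proof -
  have "Bs N Lam m \<subseteq> Pow (Lat N Lam)" unfolding Bs_def by blast
  moreover have "finite (Pow (Lat N Lam))" using finite_Lat by (rule finite_Pow_iff[THEN iffD2])
  ultimately show ?thesis by (rule finite_subset)
qed

lemma finite_Fam: "finite (Fam N Lam m t)"
proof -
  have "Fam N Lam m t \<subseteq> Pow (Lat N Lam)" unfolding Fam_def by blast
  moreover have "finite (Pow (Lat N Lam))" using finite_Lat by (rule finite_Pow_iff[THEN iffD2])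
  ultimately show ?thesis by (rule finite_subset)
qed

lemma card_Lat: assumes "0 < Lam" "N = e * Lam" shows "card (Lat N Lam) = e"
proof -
  have "card ((\<lambda>j. (j+1)*Lam) ` {..<e}) = card {..<e}" by (rule card_image[OF lat_nx(2)[OF assms]])
  then show ?thesis unfolding lat_nx(1)[OF assms, symmetric] by simp
qed

lemma card_Off: assumes "0 < Lam" "N = e * Lam" shows "card (Off N Lam) = e * (Lam - 1)"
proof -
  have "card ((\<lambda>(j,r). j*Lam + r) ` ({..<e} \<times> {1..<Lam})) = card ({..<e} \<times> {1..<Lam})"
    by (rule card_image[OF off_param(2)[OF assms]])
  also have "\<dots> = e * (Lam - 1)" by (simp add: card_cartesian_product)
  finally show ?thesis unfolding off_param(1)[OF assms, symmetric] .
qed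

lemma card_Bs: assumes "0 < Lam" "N = e * Lam" shows "card (Bs N Lam m) = e choose m"
  unfolding Bs_def using n_subsets[OF finite_Lat, of N Lam m] card_Lat[OF assms] by simp

lemma G_sum:
  "(\<Sum>t\<in>Lat N Lam. \<Sum>W\<in>Fam N Lam m t. f W t) = (\<Sum>W\<in>Bs N Lam m. \<Sum>t\<in>W. f W t)"
proof -
  have F: "Fam N Lam m t = {W. W \<in> Bs N Lam m \<and> t \<in> W}" for t unfolding Fam_def Bs_def by blast
  have "(\<Sum>t\<in>Lat N Lam. \<Sum>W\<in>Fam N Lam m t. f W t)
      = (\<Sum>W\<in>Bs N Lam m. \<Sum>t\<in>{t. t \<in> Lat N Lam \<and> t \<in> W}. f W t)"
    unfolding F by (rule sum.swap_restrict[OF finite_Lat finite_Bs])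
  also have "\<dots> = (\<Sum>W\<in>Bs N Lam m. \<Sum>t\<in>W. f W t)"
  proof (rule sum.cong[OF refl])
    fix W assume "W \<in> Bs N Lam m"
    then have "{t. t \<in> Lat N Lam \<and> t \<in> W} = W" unfolding Bs_def by blast
    then show "(\<Sum>t\<in>{t. t \<in> Lat N Lam \<and> t \<in> W}. f W t) = (\<Sum>t\<in>W. f W t)" by simp
  qed
  finally show ?thesis .
qed

lemma Bs_ne: "1 \<le> m \<Longrightarrow> W \<in> Bs N Lam m \<Longrightarrow> finite W \<and> W \<noteq> {}"
proof -
  assume m: "1 \<le> m" and W: "W \<in> Bs N Lam m"
  have f: "finite W" using W finite_Lat[of N Lam] unfolding Bs_def by (blast intro: finite_subset)
  have "card W = m" using W unfolding Bs_def by blast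
  then have "W \<noteq> {}" using m by auto
  then show ?thesis using f by blast
qed

lemma sum_gw_Bs: "1 \<le> m \<Longrightarrow> 0 < Lam \<Longrightarrow> N = e * Lam \<Longrightarrow>
  (\<Sum>W\<in>Bs N Lam m. \<Sum>t\<in>W. gw N W t) = real (e choose m)"
proof -
  assume a: "1 \<le> m" "0 < Lam" "N = e * Lam"
  have "(\<Sum>W\<in>Bs N Lam m. \<Sum>t\<in>W. gw N W t) = (\<Sum>W\<in>Bs N Lam m. 1)"
  proof (rule sum.cong[OF refl])
    fix W assume "W \<in> Bs N Lam m"
    then have "finite W" "W \<noteq> {}" using Bs_ne[OF a(1)] by blast+
    then show "(\<Sum>t\<in>W. gw N W t) = 1" by (rule gw_sum1)
  qed
  then show ?thesis using card_Bs[OF a(2,3)] by simp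
qed

lemma XL:
  assumes L: "0 < Lam" "Lam dvd N" "0 < N" "N = e * Lam" and m: "1 \<le> m"
  shows "real e * (\<Sum>W\<in>Fam N Lam m N. gw N W N) = real (e choose m)"
proof -
  have "(\<Sum>t\<in>Lat N Lam. \<Sum>W\<in>Fam N Lam m t. gw N W t) = (\<Sum>t\<in>Lat N Lam. \<Sum>W\<in>Fam N Lam m N. gw N W N)"
    by (rule sum.cong[OF refl]) (rule rot_lat[OF L(1-3)])
  also have "\<dots> = real e * (\<Sum>W\<in>Fam N Lam m N. gw N W N)" using card_Lat[OF L(1,4)] by simp
  finally show ?thesis using G_sum sum_gw_Bs[OF m L(1,4)] by metis
qed

lemma cardFam:
  assumes L: "0 < Lam" "Lam dvd N" "0 < N" "N = e * Lam"
  shows "real e * real (card (Fam N Lam m N)) = real m * real (e choose m)"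
proof -
  have "(\<Sum>t\<in>Lat N Lam. \<Sum>W\<in>Fam N Lam m t. (1::real)) = (\<Sum>t\<in>Lat N Lam. real (card (Fam N Lam m N)))"
  proof (rule sum.cong[OF refl])
    fix t assume t: "t \<in> Lat N Lam"
    have "card (Fam N Lam m t) = card (Fam N Lam m N)"
      using bij_betw_same_card[OF bij_fam[OF L(1-3) t]] by simp
    then show "(\<Sum>W\<in>Fam N Lam m t. (1::real)) = real (card (Fam N Lam m N))" by simp
  qed
  also have "\<dots> = real e * real (card (Fam N Lam m N))" using card_Lat[OF L(1,4)] by simp
  finally have 1: "(\<Sum>t\<in>Lat N Lam. \<Sum>W\<in>Fam N Lam m t. (1::real)) = real e * real (card (Fam N Lam m N))" .
  have "(\<Sum>W\<in>Bs N Lam m. \<Sum>t\<in>W. (1::real)) = (\<Sum>W\<in>Bs N Lam m. real m)"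
  proof (rule sum.cong[OF refl])
    fix W assume "W \<in> Bs N Lam m"
    then have "card W = m" unfolding Bs_def by blast
    then show "(\<Sum>t\<in>W. (1::real)) = real m" by simp
  qed
  also have "\<dots> = real m * real (e choose m)" using card_Bs[OF L(1,4)] by simp
  finally show ?thesis using 1 G_sum[of "\<lambda>W t. (1::real)" N Lam m] by simp
qed

lemma XO:
  assumes L: "0 < Lam" "Lam dvd N" "0 < N" "N = e * Lam" and m: "1 \<le> m"
  shows "real e * (\<Sum>S\<in>Off N Lam. \<Sum>T\<in>Fam N Lam m N. gw N (insert S T) N)
     = real (card (Off N Lam)) * real (e choose m) - (\<Sum>S\<in>Off N Lam. \<Sum>T\<in>Bs N Lam m. gw N (insert S T) S)"
proof -
  have "(\<Sum>t\<in>Lat N Lam. \<Sum>S\<in>Off N Lam. \<Sum>T\<in>Fam N Lam m t. gw N (insert S T) t)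
      = (\<Sum>t\<in>Lat N Lam. \<Sum>S\<in>Off N Lam. \<Sum>T\<in>Fam N Lam m N. gw N (insert S T) N)"
    by (rule sum.cong[OF refl]) (rule rot_off[OF L(1-3)])
  also have "\<dots> = real e * (\<Sum>S\<in>Off N Lam. \<Sum>T\<in>Fam N Lam m N. gw N (insert S T) N)"
    using card_Lat[OF L(1,4)] by simp
  finally have 1: "(\<Sum>t\<in>Lat N Lam. \<Sum>S\<in>Off N Lam. \<Sum>T\<in>Fam N Lam m t. gw N (insert S T) t)
      = real e * (\<Sum>S\<in>Off N Lam. \<Sum>T\<in>Fam N Lam m N. gw N (insert S T) N)" .
  have "(\<Sum>t\<in>Lat N Lam. \<Sum>S\<in>Off N Lam. \<Sum>T\<in>Fam N Lam m t. gw N (insert S T) t)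
      = (\<Sum>S\<in>Off N Lam. \<Sum>t\<in>Lat N Lam. \<Sum>T\<in>Fam N Lam m t. gw N (insert S T) t)"
    by (rule sum.swap)
  also have "\<dots> = (\<Sum>S\<in>Off N Lam. \<Sum>T\<in>Bs N Lam m. \<Sum>t\<in>T. gw N (insert S T) t)"
    by (rule sum.cong[OF refl]) (rule G_sum)
  also have "\<dots> = (\<Sum>S\<in>Off N Lam. \<Sum>T\<in>Bs N Lam m. 1 - gw N (insert S T) S)"
  proof (intro sum.cong[OF refl])
    fix S T assume S: "S \<in> Off N Lam" and T: "T \<in> Bs N Lam m"
    have ST: "S \<notin> T" using S T unfolding Off_def Lat_def Bs_def by auto
    have fT: "finite T" using Bs_ne[OF m T] by simp
    have "(\<Sum>a\<in>insert S T. gw N (insert S T) a) = 1" using gw_sum1[of "insert S T" N] fT by simp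
    then have "gw N (insert S T) S + (\<Sum>a\<in>T. gw N (insert S T) a) = 1" using fT ST by simp
    then show "(\<Sum>t\<in>T. gw N (insert S T) t) = 1 - gw N (insert S T) S" by simp
  qed
  also have "\<dots> = (\<Sum>S\<in>Off N Lam. real (e choose m) - (\<Sum>T\<in>Bs N Lam m. gw N (insert S T) S))"
    using card_Bs[OF L(1,4)] by (simp add: sum_subtractf)
  also have "\<dots> = real (card (Off N Lam)) * real (e choose m) - (\<Sum>S\<in>Off N Lam. \<Sum>T\<in>Bs N Lam m. gw N (insert S T) S)"
    by (simp add: sum_subtractf)
  finally show ?thesis using 1 by simp
qed

lemma YL:
  assumes L: "0 < Lam" "Lam dvd N" "0 < N" "N = e * Lam"
  shows "(\<Sum>T\<in>Bs N Lam m. \<Sum>s\<in>Lat N Lam - T. gw N (insert s T) s) = real (e choose (m+1))"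
proof -
  have "(\<Sum>T\<in>Bs N Lam m. \<Sum>s\<in>Lat N Lam - T. gw N (insert s T) s)
      = (\<Sum>T\<in>Bs N Lam m. \<Sum>s\<in>{s. s \<in> Lat N Lam \<and> s \<notin> T}. gw N (insert s T) s)"
    by (intro sum.cong) auto
  also have "\<dots> = (\<Sum>s\<in>Lat N Lam. \<Sum>T\<in>{T. T \<in> Bs N Lam m \<and> s \<notin> T}. gw N (insert s T) s)"
    by (rule sum.swap_restrict[OF finite_Bs finite_Lat])
  also have "\<dots> = (\<Sum>s\<in>Lat N Lam. \<Sum>W\<in>Fam N Lam (m+1) s. gw N W s)"
  proof (rule sum.cong[OF refl])
    fix s assume s: "s \<in> Lat N Lam"
    have bij: "bij_betw (insert s) {T. T \<in> Bs N Lam m \<and> s \<notin> T} (Fam N Lam (m+1) s)"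
    proof (rule bij_betw_byWitness[where f'="\<lambda>W. W - {s}"])
      show "\<forall>a\<in>{T. T \<in> Bs N Lam m \<and> s \<notin> T}. insert s a - {s} = a" by blast
      show "\<forall>a'\<in>Fam N Lam (m + 1) s. insert s (a' - {s}) = a'" unfolding Fam_def by blast
      show "insert s ` {T. T \<in> Bs N Lam m \<and> s \<notin> T} \<subseteq> Fam N Lam (m + 1) s"
      proof
        fix W assume "W \<in> insert s ` {T. T \<in> Bs N Lam m \<and> s \<notin> T}"
        then obtain T where T: "T \<in> Bs N Lam m" "s \<notin> T" "W = insert s T" by blast
        have "finite T" using T finite_Lat unfolding Bs_def by (auto intro: finite_subset)
        then show "W \<in> Fam N Lam (m + 1) s" using T s unfolding Fam_def Bs_def by auto
      qed
      show "(\<lambda>W. W - {s}) ` Fam N Lam (m + 1) s \<subseteq> {T. T \<in> Bs N Lam m \<and> s \<notin> T}"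
      proof
        fix V assume "V \<in> (\<lambda>W. W - {s}) ` Fam N Lam (m + 1) s"
        then obtain W where W: "W \<in> Fam N Lam (m+1) s" "V = W - {s}" by blast
        have "finite W" using W finite_Lat unfolding Fam_def by (auto intro: finite_subset)
        then show "V \<in> {T. T \<in> Bs N Lam m \<and> s \<notin> T}" using W unfolding Fam_def Bs_def by auto
      qed
    qed
    show "(\<Sum>T\<in>{T. T \<in> Bs N Lam m \<and> s \<notin> T}. gw N (insert s T) s) = (\<Sum>W\<in>Fam N Lam (m+1) s. gw N W s)"
      using sum.reindex_bij_betw[OF bij, of "\<lambda>W. gw N W s"] by simp
  qed
  also have "\<dots> = (\<Sum>W\<in>Bs N Lam (m+1). \<Sum>t\<in>W. gw N W t)" by (rule G_sum)
  also have "\<dots> = real (e choose (m+1))" by (rule sum_gw_Bs) (use L in auto)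
  finally show ?thesis .
qed




lemma alg_off:
  fixes E l a Bn Bn1 c X P :: real
  assumes E: "E > 0" and l: "l \<ge> 1" and a: "a \<ge> 0" and Bn: "Bn \<ge> 0"
    and hX: "E * X = E * a * Bn - P" and hP1: "a * Bn1 \<le> P" and hP2: "P \<le> a * Bn1 + a * Bn"
    and hc: "E * c = l * Bn" and hB: "(l + 1) * Bn1 = (E - l) * Bn"
  shows "1 / (l + 1) * (1 - 1 / (l * E)) * (E * a * c) \<le> X \<and> X \<le> 1 / (l + 1) * (1 + 1 / E) * (E * a * c)"
proof -
  have l1: "l + 1 > 0" using l by simp
  have u1: "(l+1) * P \<ge> (l+1) * (a * Bn1)" using hP1 l1 by (intro mult_left_mono) auto
  have "a * ((l+1) * Bn1) = a * ((E - l) * Bn)" using hB by simp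
  then have u2: "(l+1) * (a * Bn1) = a * (E - l) * Bn" by (simp add: algebra_simps)
  have up: "(l+1) * (E * X) \<le> a * (E + 1) * (E * c)"
  proof -
    have "(l+1) * (E * X) = (l+1) * (E * a * Bn - P)" using hX by simp
    also have "\<dots> = (l+1) * (E * a * Bn) - (l+1) * P" by (simp add: algebra_simps)
    also have "\<dots> \<le> (l+1) * (E * a * Bn) - a * (E - l) * Bn" using u1 u2 by linarith
    also have "\<dots> = a * (E + 1) * (l * Bn)" by (simp add: algebra_simps)
    also have "\<dots> = a * (E + 1) * (E * c)" using hc by simp
    finally show ?thesis .
  qed
  have d1: "(l+1) * P \<le> (l+1) * (a * Bn1 + a * Bn)" using hP2 l1 by (intro mult_left_mono) auto
  have lo: "a * (l * E - 1) * (E * c) \<le> l * ((l+1) * (E * X))"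
  proof -
    have "(l+1) * (E * X) = (l+1) * (E * a * Bn - P)" using hX by simp
    also have "\<dots> = (l+1) * (E * a * Bn) - (l+1) * P" by (simp add: algebra_simps)
    also have "\<dots> \<ge> (l+1) * (E * a * Bn) - (a * (E - l) * Bn + (l+1) * (a * Bn))"
      using d1 u2 by (simp add: algebra_simps)
    finally have "(l+1) * (E * X) \<ge> a * Bn * (l * E - 1)" by (simp add: algebra_simps)
    then have "l * ((l+1) * (E * X)) \<ge> l * (a * Bn * (l * E - 1))" using l by (intro mult_left_mono) auto
    also have "l * (a * Bn * (l * E - 1)) = a * (l * E - 1) * (l * Bn)" by (simp add: algebra_simps)
    also have "\<dots> = a * (l * E - 1) * (E * c)" using hc by simp
    finally show ?thesis .
  qed
  have eq1: "1 / (l + 1) * (1 + 1 / E) * (E * a * c) = a * (E + 1) * (E * c) / ((l + 1) * E)"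
    using E l1 by (simp add: field_simps)
  have eq2: "1 / (l + 1) * (1 - 1 / (l * E)) * (E * a * c) = a * (l * E - 1) * (E * c) / (l * ((l + 1) * E))"
    using E l1 l by (simp add: field_simps)
  have p1: "(l + 1) * E > 0" using E l1 by simp
  have p2: "l * ((l + 1) * E) > 0" using E l1 l by simp
  have x1: "X * ((l+1)*E) = (l+1)*(E*X)" by (simp add: algebra_simps)
  have x2: "X * (l * ((l+1)*E)) = l * ((l+1)*(E*X))" by (simp add: algebra_simps)
  have "X \<le> a * (E + 1) * (E * c) / ((l + 1) * E)"
    unfolding pos_le_divide_eq[OF p1] x1 using up .
  moreover have "a * (l * E - 1) * (E * c) / (l * ((l + 1) * E)) \<le> X"
    unfolding pos_divide_le_eq[OF p2] x2 using lo .
  ultimately show ?thesis using eq1 eq2 by simp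
qed




lemma N_Lat: "0 < Lam \<Longrightarrow> Lam dvd N \<Longrightarrow> 0 < N \<Longrightarrow> N \<in> Lat N Lam"
  unfolding Lat_def by simp

lemma lat_reindex:
  assumes NL: "N \<in> Lat N Lam"
  shows "(\<Sum>S\<in>Lat N Lam - {N}. \<Sum>T\<in>{T. T \<subseteq> Lat N Lam - {N} - {S} \<and> card T = k}. g (insert S (insert N T)))
       = real (k+1) * (\<Sum>W\<in>Fam N Lam (k+2) N. (g W :: real))"
proof -
  have "(\<Sum>S\<in>Lat N Lam - {N}. \<Sum>T\<in>{T. T \<subseteq> Lat N Lam - {N} - {S} \<and> card T = k}. g (insert S (insert N T)))
      = (\<Sum>S\<in>Lat N Lam - {N}. \<Sum>W\<in>{W. W \<in> Fam N Lam (k+2) N \<and> S \<in> W}. g W)"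
  proof (rule sum.cong[OF refl])
    fix S assume S: "S \<in> Lat N Lam - {N}"
    have bij: "bij_betw (\<lambda>T. insert S (insert N T)) {T. T \<subseteq> Lat N Lam - {N} - {S} \<and> card T = k}
        {W. W \<in> Fam N Lam (k+2) N \<and> S \<in> W}"
    proof (rule bij_betw_byWitness[where f'="\<lambda>W. W - {N, S}"])
      show "\<forall>a\<in>{T. T \<subseteq> Lat N Lam - {N} - {S} \<and> card T = k}. insert S (insert N a) - {N, S} = a" by blast
      show "\<forall>a'\<in>{W. W \<in> Fam N Lam (k + 2) N \<and> S \<in> W}. insert S (insert N (a' - {N, S})) = a'"
        unfolding Fam_def by blast
      show "(\<lambda>T. insert S (insert N T)) ` {T. T \<subseteq> Lat N Lam - {N} - {S} \<and> card T = k}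
          \<subseteq> {W. W \<in> Fam N Lam (k + 2) N \<and> S \<in> W}"
      proof
        fix W assume "W \<in> (\<lambda>T. insert S (insert N T)) ` {T. T \<subseteq> Lat N Lam - {N} - {S} \<and> card T = k}"
        then obtain T where T: "T \<subseteq> Lat N Lam - {N} - {S}" "card T = k" "W = insert S (insert N T)" by blast
        have fT: "finite T" using T(1) finite_Lat[of N Lam] by (blast intro: finite_subset)
        have "N \<notin> T" "S \<notin> T" "S \<noteq> N" using T S by auto
        then have "card W = k + 2" using T fT by simp
        moreover have "W \<subseteq> Lat N Lam" using T S NL by blast
        ultimately show "W \<in> {W. W \<in> Fam N Lam (k + 2) N \<and> S \<in> W}" unfolding Fam_def using T by blast
      qed
      show "(\<lambda>W. W - {N, S}) ` {W. W \<in> Fam N Lam (k + 2) N \<and> S \<in> W}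
          \<subseteq> {T. T \<subseteq> Lat N Lam - {N} - {S} \<and> card T = k}"
      proof
        fix V assume "V \<in> (\<lambda>W. W - {N, S}) ` {W. W \<in> Fam N Lam (k + 2) N \<and> S \<in> W}"
        then obtain W where W: "W \<in> Fam N Lam (k+2) N" "S \<in> W" "V = W - {N, S}" by blast
        have Ws: "W \<subseteq> Lat N Lam" "card W = k + 2" "N \<in> W" using W unfolding Fam_def by auto
        have fW: "finite W" using Ws finite_Lat[of N Lam] by (blast intro: finite_subset)
        have SN: "S \<noteq> N" using S by blast
        have "card (W - {N, S}) = card W - card {N, S}" using Ws W(2) fW by (intro card_Diff_subset) auto
        then have "card V = k" using W(3) Ws SN by simp
        moreover have "V \<subseteq> Lat N Lam - {N} - {S}" using W Ws by blast
        ultimately show "V \<in> {T. T \<subseteq> Lat N Lam - {N} - {S} \<and> card T = k}" by blast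
      qed
    qed
    show "(\<Sum>T\<in>{T. T \<subseteq> Lat N Lam - {N} - {S} \<and> card T = k}. g (insert S (insert N T)))
        = (\<Sum>W\<in>{W. W \<in> Fam N Lam (k+2) N \<and> S \<in> W}. g W)"
      using sum.reindex_bij_betw[OF bij, of g] by simp
  qed
  also have "\<dots> = (\<Sum>W\<in>Fam N Lam (k+2) N. \<Sum>S\<in>{S. S \<in> Lat N Lam - {N} \<and> S \<in> W}. g W)"
    by (rule sum.swap_restrict) (simp_all add: finite_Lat finite_Fam)
  also have "\<dots> = (\<Sum>W\<in>Fam N Lam (k+2) N. real (k+1) * g W)"
  proof (rule sum.cong[OF refl])
    fix W assume W: "W \<in> Fam N Lam (k+2) N"
    have Ws: "W \<subseteq> Lat N Lam" "card W = k + 2" "N \<in> W" using W unfolding Fam_def by auto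
    have fW: "finite W" using Ws finite_Lat[of N Lam] by (blast intro: finite_subset)
    have e: "{S. S \<in> Lat N Lam - {N} \<and> S \<in> W} = W - {N}" using Ws by blast
    have "card (W - {N}) = k + 1" using Ws fW by simp
    then show "(\<Sum>S\<in>{S. S \<in> Lat N Lam - {N} \<and> S \<in> W}. g W) = real (k+1) * g W" unfolding e by simp
  qed
  also have "\<dots> = real (k+1) * (\<Sum>W\<in>Fam N Lam (k+2) N. g W)" by (simp add: sum_distrib_left)
  finally show ?thesis .
qed

lemma off_reindex:
  assumes NL: "N \<in> Lat N Lam"
  shows "(\<Sum>T\<in>{T. T \<subseteq> Lat N Lam - {N} \<and> card T = k}. g (insert N T))
       = (\<Sum>W\<in>Fam N Lam (k+1) N. (g W :: real))"
proof -
  have bij: "bij_betw (insert N) {T. T \<subseteq> Lat N Lam - {N} \<and> card T = k} (Fam N Lam (k+1) N)"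
  proof (rule bij_betw_byWitness[where f'="\<lambda>W. W - {N}"])
    show "\<forall>a\<in>{T. T \<subseteq> Lat N Lam - {N} \<and> card T = k}. insert N a - {N} = a" by blast
    show "\<forall>a'\<in>Fam N Lam (k + 1) N. insert N (a' - {N}) = a'" unfolding Fam_def by blast
    show "insert N ` {T. T \<subseteq> Lat N Lam - {N} \<and> card T = k} \<subseteq> Fam N Lam (k + 1) N"
    proof
      fix W assume "W \<in> insert N ` {T. T \<subseteq> Lat N Lam - {N} \<and> card T = k}"
      then obtain T where T: "T \<subseteq> Lat N Lam - {N}" "card T = k" "W = insert N T" by blast
      have fT: "finite T" using T(1) finite_Lat[of N Lam] by (blast intro: finite_subset)
      have "N \<notin> T" using T by auto
      then have "card W = k + 1" using T fT by simp
      then show "W \<in> Fam N Lam (k + 1) N" unfolding Fam_def using T NL by blast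
    qed
    show "(\<lambda>W. W - {N}) ` Fam N Lam (k + 1) N \<subseteq> {T. T \<subseteq> Lat N Lam - {N} \<and> card T = k}"
    proof
      fix V assume "V \<in> (\<lambda>W. W - {N}) ` Fam N Lam (k + 1) N"
      then obtain W where W: "W \<in> Fam N Lam (k+1) N" "V = W - {N}" by blast
      have Ws: "W \<subseteq> Lat N Lam" "card W = k + 1" "N \<in> W" using W unfolding Fam_def by auto
      have fW: "finite W" using Ws finite_Lat[of N Lam] by (blast intro: finite_subset)
      have "card V = k" using W Ws fW by simp
      then show "V \<in> {T. T \<subseteq> Lat N Lam - {N} \<and> card T = k}" using W Ws by blast
    qed
  qed
  show ?thesis using sum.reindex_bij_betw[OF bij, of g] by simp
qed




lemma binom_id: "ell \<le> e \<Longrightarrow> (real ell + 1) * real (e choose (ell+1)) = (real e - real ell) * real (e choose ell)"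
proof -
  assume le: "ell \<le> e"
  have "Suc ell * (e choose Suc ell) = e * ((e - 1) choose ell)" by (rule binomial_absorption)
  moreover have "(e - ell) * (e choose ell) = e * ((e - 1) choose ell)" by (rule binomial_absorb_comp)
  ultimately have "(ell + 1) * (e choose (ell+1)) = (e - ell) * (e choose ell)" by simp
  then have "real ((ell + 1) * (e choose (ell+1))) = real ((e - ell) * (e choose ell))" by simp
  then show ?thesis using le by (simp add: of_nat_diff algebra_simps)
qed

lemma off_class:
  assumes L: "0 < Lam" "Lam dvd N" "0 < N" "N = e * Lam" and ell: "1 \<le> ell" "ell \<le> e"
  shows "1 / (real ell + 1) * (1 - 1 / (real ell * real e)) * (real (card (Off N Lam)) * real (card (Fam N Lam ell N)))
           \<le> (\<Sum>S\<in>Off N Lam. \<Sum>T\<in>Fam N Lam ell N. gw N (insert S T) N)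
       \<and> (\<Sum>S\<in>Off N Lam. \<Sum>T\<in>Fam N Lam ell N. gw N (insert S T) N)
           \<le> 1 / (real ell + 1) * (1 + 1 / real e) * (real (card (Off N Lam)) * real (card (Fam N Lam ell N)))"
proof -
  define X where "X = (\<Sum>S\<in>Off N Lam. \<Sum>T\<in>Fam N Lam ell N. gw N (insert S T) N)"
  define P where "P = (\<Sum>S\<in>Off N Lam. \<Sum>T\<in>Bs N Lam ell. gw N (insert S T) S)"
  define a where "a = real (Lam - 1)"
  define Bn where "Bn = real (e choose ell)"
  define Bn1 where "Bn1 = real (e choose (ell+1))"
  define c where "c = real (card (Fam N Lam ell N))"
  have e0: "0 < e" using ell by simp
  have cO: "real (card (Off N Lam)) = real e * a" unfolding a_def using card_Off[OF L(1,4)] by simp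
  have hX: "real e * X = real e * a * Bn - P"
    unfolding X_def P_def Bn_def using XO[OF L ell(1)] cO by simp
  have Pswap: "P = (\<Sum>T\<in>Bs N Lam ell. \<Sum>S\<in>Off N Lam. gw N (insert S T) S)"
    unfolding P_def by (rule sum.swap)
  have TT: "T \<subseteq> Lat N Lam \<and> finite T \<and> T \<noteq> {}" if "T \<in> Bs N Lam ell" for T
    using Bs_ne[OF ell(1) that] that unfolding Bs_def by blast
  have hP1: "a * Bn1 \<le> P"
  proof -
    have "a * Bn1 = a * (\<Sum>T\<in>Bs N Lam ell. (\<Sum>s\<in>Lat N Lam - T. gw N (insert s T) s))"
      unfolding Bn1_def using YL[OF L, of ell] by simp
    also have "\<dots> = (\<Sum>T\<in>Bs N Lam ell. a * (\<Sum>s\<in>Lat N Lam - T. gw N (insert s T) s))"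
      by (rule sum_distrib_left)
    also have "\<dots> \<le> (\<Sum>T\<in>Bs N Lam ell. \<Sum>S\<in>Off N Lam. gw N (insert S T) S)"
    proof (rule sum_mono)
      fix T assume "T \<in> Bs N Lam ell"
      then have T: "T \<subseteq> Lat N Lam" "finite T" "T \<noteq> {}" using TT by blast+
      show "a * (\<Sum>s\<in>Lat N Lam - T. gw N (insert s T) s) \<le> (\<Sum>S\<in>Off N Lam. gw N (insert S T) S)"
        unfolding a_def by (rule lower_T[OF L(1,4,2) T])
    qed
    finally show ?thesis using Pswap by simp
  qed
  have hP2: "P \<le> a * Bn1 + a * Bn"
  proof -
    have "P \<le> (\<Sum>T\<in>Bs N Lam ell. a * (\<Sum>s\<in>Lat N Lam - T. gw N (insert s T) s) + a)"
      unfolding Pswap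
    proof (rule sum_mono)
      fix T assume "T \<in> Bs N Lam ell"
      then have T: "T \<subseteq> Lat N Lam" "finite T" "T \<noteq> {}" using TT by blast+
      show "(\<Sum>S\<in>Off N Lam. gw N (insert S T) S) \<le> a * (\<Sum>s\<in>Lat N Lam - T. gw N (insert s T) s) + a"
        unfolding a_def by (rule upper_T[OF L(1,4,2) T])
    qed
    also have "\<dots> = a * (\<Sum>T\<in>Bs N Lam ell. \<Sum>s\<in>Lat N Lam - T. gw N (insert s T) s) + a * real (card (Bs N Lam ell))"
      by (simp add: sum.distrib sum_distrib_left)
    also have "\<dots> = a * Bn1 + a * Bn" unfolding Bn1_def Bn_def using YL[OF L, of ell] card_Bs[OF L(1,4)] by simp
    finally show ?thesis .
  qed
  have hc: "real e * c = real ell * Bn" unfolding c_def Bn_def using cardFam[OF L] by simp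
  have hB: "(real ell + 1) * Bn1 = (real e - real ell) * Bn" unfolding Bn1_def Bn_def by (rule binom_id[OF ell(2)])
  have r: "1 / (real ell + 1) * (1 - 1 / (real ell * real e)) * (real e * a * c) \<le> X \<and>
           X \<le> 1 / (real ell + 1) * (1 + 1 / real e) * (real e * a * c)"
    by (rule alg_off[OF _ _ _ _ hX hP1 hP2 hc hB]) (use e0 ell in \<open>auto simp: a_def Bn_def\<close>)
  have cc: "real (card (Off N Lam)) * real (card (Fam N Lam ell N)) = real e * a * c" using cO unfolding c_def by simp
  show ?thesis using r unfolding cc X_def .
qed

lemma lat_class:
  assumes L: "0 < Lam" "Lam dvd N" "0 < N" "N = e * Lam" and ell: "1 \<le> ell" "ell \<le> e"
  shows "(real ell + 1) * (\<Sum>S\<in>Lat N Lam - {N}. \<Sum>T\<in>{T. T \<subseteq> Lat N Lam - {N} - {S} \<and> card T = ell - 1}. gw N (insert S (insert N T)) N)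
        = (\<Sum>S\<in>Lat N Lam - {N}. \<Sum>T\<in>{T. T \<subseteq> Lat N Lam - {N} - {S} \<and> card T = ell - 1}. 1)"
proof -
  have NL: "N \<in> Lat N Lam" using N_Lat[OF L(1-3)] .
  have k: "ell - 1 + 1 = ell" "ell - 1 + 2 = ell + 1" using ell by auto
  have Y: "(\<Sum>S\<in>Lat N Lam - {N}. \<Sum>T\<in>{T. T \<subseteq> Lat N Lam - {N} - {S} \<and> card T = ell - 1}. gw N (insert S (insert N T)) N)
     = real ell * (\<Sum>W\<in>Fam N Lam (ell+1) N. gw N W N)"
    using lat_reindex[OF NL, where k="ell - 1" and g="\<lambda>W. gw N W N"] k by simp
  have C: "(\<Sum>S\<in>Lat N Lam - {N}. \<Sum>T\<in>{T. T \<subseteq> Lat N Lam - {N} - {S} \<and> card T = ell - 1}. (1::real))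
     = real ell * real (card (Fam N Lam (ell+1) N))"
    using lat_reindex[OF NL, where k="ell - 1" and g="\<lambda>W. 1"] k by simp
  have e1: "real e * (\<Sum>W\<in>Fam N Lam (ell+1) N. gw N W N) = real (e choose (ell+1))" by (rule XL[OF L]) simp
  have e2: "real e * real (card (Fam N Lam (ell+1) N)) = real (ell+1) * real (e choose (ell+1))" by (rule cardFam[OF L])
  have e0: "real e > 0" using ell by simp
  have "real e * ((real ell + 1) * (real ell * (\<Sum>W\<in>Fam N Lam (ell+1) N. gw N W N)))
      = real e * (real ell * real (card (Fam N Lam (ell+1) N)))"
  proof -
    have "real e * ((real ell + 1) * (real ell * (\<Sum>W\<in>Fam N Lam (ell+1) N. gw N W N)))
        = (real ell + 1) * real ell * (real e * (\<Sum>W\<in>Fam N Lam (ell+1) N. gw N W N))" by (simp add: algebra_simps)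
    also have "\<dots> = real ell * (real e * real (card (Fam N Lam (ell+1) N)))" unfolding e1 e2 by (simp add: algebra_simps)
    finally show ?thesis by (simp add: algebra_simps)
  qed
  then have "(real ell + 1) * (real ell * (\<Sum>W\<in>Fam N Lam (ell+1) N. gw N W N)) = real ell * real (card (Fam N Lam (ell+1) N))"
    using e0 by simp
  then show ?thesis unfolding Y C .
qed




lemma homed_Lat: assumes "0 < Lam" "Lam dvd N" shows "homed N Lam Lam = Lat N Lam"
proof -
  obtain e where e: "N = e * Lam" using assms(2) by (metis dvd_def mult.commute)
  have d: "N div Lam = e" using e assms(1) by simp
  have "homed N Lam Lam = (\<lambda>j. (j+1)*Lam) ` {..<e}" unfolding homed_def d by (auto simp: algebra_simps)
  then show ?thesis using lat_nx(1)[OF assms(1) e] by simp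
qed

lemma gap_bridge:
  assumes A: "A \<subseteq> {1..N}" "finite A" and x: "x \<in> A" and c: "2 \<le> card A"
  shows "gap_len N A x = gp N A x"
proof -
  have xr: "x \<in> {1..N}" using A x by blast
  have fin: "finite (dst N x ` (A - {x}))" using A by blast
  show ?thesis
  proof (cases "\<exists>y\<in>A. x < y")
    case True
    define m where "m = Min {y\<in>A. x < y}"
    have fm: "finite {y\<in>A. x < y}" using A by simp
    have nm: "{y\<in>A. x < y} \<noteq> {}" using True by blast
    have mi: "m \<in> {y\<in>A. x < y}" unfolding m_def using fm nm by (rule Min_in)
    have mr: "m \<in> {1..N}" using mi A by blast
    have g: "gap_len N A x = m - x" unfolding gap_len_def m_def using True by simp
    have "Min (dst N x ` (A - {x})) = m - x"
    proof (rule Min_eqI[OF fin])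
      fix d assume "d \<in> dst N x ` (A - {x})"
      then obtain a where a: "a \<in> A - {x}" "d = dst N x a" by blast
      have ar: "a \<in> {1..N}" using a A by blast
      show "m - x \<le> d"
      proof (cases "x \<le> a")
        case True
        then have "a \<in> {y\<in>A. x < y}" using a by auto
        then have "m \<le> a" unfolding m_def by (rule Min_le[OF fm])
        then show ?thesis using a True dst_eq[OF xr ar] by simp
      next
        case False
        have "m \<le> a + N" using mr ar by simp
        then have "m - x \<le> a + N - x" by (rule diff_le_mono)
        then show ?thesis using a False dst_eq[OF xr ar] by simp
      qed
    next
      show "m - x \<in> dst N x ` (A - {x})"
        using mi dst_eq[OF xr mr] by (intro image_eqI[where x=m]) auto
    qed
    then show ?thesis unfolding g gp_def by simp
  next
    case False
    have g: "gap_len N A x = Min A + N - x" unfolding gap_len_def using False by simp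
    have c1: "card (A - {x}) \<ge> 1" using c x A by simp
    have "A - {x} \<noteq> {}"
    proof
      assume "A - {x} = {}"
      then have "card (A - {x}) = 0" by (simp only: card.empty)
      then show False using c1 by simp
    qed
    then obtain b where b: "b \<in> A - {x}" by blast
    have "b \<noteq> x" "\<not> x < b" using b False by blast+
    then have bx: "b < x" by simp
    have "A \<noteq> {}" using x by blast
    then have mA: "Min A \<in> A" by (rule Min_in[OF A(2)])
    have mb: "Min A \<le> b" using b by (intro Min_le[OF A(2)]) blast
    have mr: "Min A \<in> {1..N}" using mA A by blast
    have "Min (dst N x ` (A - {x})) = Min A + N - x"
    proof (rule Min_eqI[OF fin])
      fix d assume "d \<in> dst N x ` (A - {x})"
      then obtain a where a: "a \<in> A - {x}" "d = dst N x a" by blast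
      have ar: "a \<in> {1..N}" using a A by blast
      have "a \<noteq> x" "\<not> x < a" using a False by blast+
      then have ax: "a < x" by simp
      have "Min A \<le> a" using a by (intro Min_le[OF A(2)]) blast
      then show "Min A + N - x \<le> d" using a ax dst_eq[OF xr ar] by simp
    next
      have "Min A < x" using mb bx by simp
      then show "Min A + N - x \<in> dst N x ` (A - {x})"
        using mA dst_eq[OF xr mr] by (intro image_eqI[where x="Min A"]) auto
    qed
    then show ?thesis unfolding g gp_def by simp
  qed
qed

lemma LGS_eq:
  assumes A: "A \<subseteq> {1..N}" "finite A" "2 \<le> card A"
  shows "largest_gap_starts N A = (\<lambda>x. x mod N) ` AM N A"
proof -
  have "{x\<in>A. \<forall>y\<in>A. gap_len N A y \<le> gap_len N A x} = AM N A"
    unfolding AM_def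
  proof (rule Collect_cong)
    fix x
    show "(x \<in> A \<and> (\<forall>y\<in>A. gap_len N A y \<le> gap_len N A x)) = (x \<in> A \<and> (\<forall>y\<in>A. gp N A y \<le> gp N A x))"
    proof (cases "x \<in> A")
      case True
      have "\<forall>y\<in>A. gap_len N A y = gp N A y" using gap_bridge[OF A(1,2) _ A(3)] by blast
      then show ?thesis using True gap_bridge[OF A(1,2) True A(3)] by simp
    qed simp
  qed
  then show ?thesis unfolding largest_gap_starts_def by simp
qed

lemma mod_inj: "0 < (N::nat) \<Longrightarrow> inj_on (\<lambda>x. x mod N) {1..N}"
proof (rule inj_onI)
  fix x y assume N: "0 < N" and x: "x \<in> {1..N}" and y: "y \<in> {1..N}" and e: "x mod N = y mod N"
  show "x = y"
  proof (cases "x = N")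
    case True
    then have "x mod N = 0" by simp
    then have "y mod N = 0" using e by simp
    then show ?thesis using y True by (metis atLeastAtMost_iff le_neq_implies_less mod_less not_one_le_zero)
  next
    case False
    then have xl: "x < N" using x by simp
    show ?thesis
    proof (cases "y = N")
      case True
      then have "x mod N = 0" using e by simp
      then show ?thesis using x xl by simp
    next
      case False
      then have "y < N" using y by simp
      then show ?thesis using e xl by simp
    qed
  qed
qed

lemma prob_LGS:
  assumes N: "0 < N" and A: "A \<subseteq> {1..N}" "finite A" "2 \<le> card A" and NA: "N \<in> A"
  shows "largest_gap_starts N A \<noteq> {}" "finite (largest_gap_starts N A)"
    "measure_pmf.prob (pmf_of_set (largest_gap_starts N A)) {0} = gw N A N"
proof -
  have ne: "A \<noteq> {}" using NA by blast
  have sub: "AM N A \<subseteq> {1..N}" using AM_sub A by blast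
  have inj: "inj_on (\<lambda>x. x mod N) (AM N A)" using mod_inj[OF N] sub by (rule inj_on_subset)
  have L: "largest_gap_starts N A = (\<lambda>x. x mod N) ` AM N A" by (rule LGS_eq[OF A])
  show ne2: "largest_gap_starts N A \<noteq> {}" unfolding L using AM_ne[OF A(2) ne] by simp
  have fAM: "finite (AM N A)" using AM_sub A(2) by (rule finite_subset)
  show f2: "finite (largest_gap_starts N A)" unfolding L using fAM by simp
  have c: "card (largest_gap_starts N A) = card (AM N A)" unfolding L using inj by (rule card_image)
  have i: "largest_gap_starts N A \<inter> {0} = (if N \<in> AM N A then {0} else {})"
  proof -
    have "0 \<in> largest_gap_starts N A \<longleftrightarrow> N \<in> AM N A"
    proof
      assume "0 \<in> largest_gap_starts N A"
      then obtain x where x1: "x \<in> AM N A" "0 = x mod N" unfolding L by (rule imageE)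
      then have "x \<in> AM N A" "x mod N = 0" by simp_all
      moreover then have "x \<in> {1..N}" using sub by blast
      ultimately have "x = N"
      proof -
        assume h: "x \<in> AM N A" "x mod N = 0" "x \<in> {1..N}"
        show "x = N"
        proof (rule ccontr)
          assume "x \<noteq> N"
          then have "x < N" using h by simp
          then have "x mod N = x" by simp
          then show False using h by simp
        qed
      qed
      then show "N \<in> AM N A" using \<open>x \<in> AM N A\<close> by simp
    next
      assume "N \<in> AM N A"
      then show "0 \<in> largest_gap_starts N A" unfolding L by (intro image_eqI[where x=N]) auto
    qed
    then show ?thesis by auto
  qed
  show "measure_pmf.prob (pmf_of_set (largest_gap_starts N A)) {0} = gw N A N"
    unfolding measure_pmf_of_set[OF ne2 f2] gw_def c i by simp
qed




lemma fiber:
  assumes X: "finite X" and Y: "Y \<subseteq> X" and kn: "k \<le> n"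
  shows "(\<Sum>F\<in>{F. F \<subseteq> X \<and> card F = n}. if card (F \<inter> Y) = k then h (F \<inter> Y) else 0)
       = real (card (X - Y) choose (n - k)) * (\<Sum>T\<in>{T. T \<subseteq> Y \<and> card T = k}. (h T :: real))"
proof -
  define Fs where "Fs = {F. F \<subseteq> X \<and> card F = n}"
  define TS where "TS = {T. T \<subseteq> Y \<and> card T = k}"
  define US where "US = {U. U \<subseteq> X - Y \<and> card U = n - k}"
  have fFs: "finite Fs"
  proof -
    have "Fs \<subseteq> Pow X" unfolding Fs_def by blast
    moreover have "finite (Pow X)" using X by simp
    ultimately show ?thesis by (rule finite_subset)
  qed
  have "(\<Sum>F\<in>Fs. if card (F \<inter> Y) = k then h (F \<inter> Y) else 0) = (\<Sum>F\<in>{F\<in>Fs. card (F \<inter> Y) = k}. h (F \<inter> Y))"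
    by (rule sum.inter_filter[OF fFs, symmetric])
  also have "\<dots> = (\<Sum>p\<in>TS \<times> US. h (((\<lambda>(T,U). T \<union> U) p) \<inter> Y))"
  proof -
    have bij: "bij_betw (\<lambda>(T,U). T \<union> U) (TS \<times> US) {F\<in>Fs. card (F \<inter> Y) = k}"
    proof (rule bij_betw_byWitness[where f'="\<lambda>F. (F \<inter> Y, F - Y)"])
      show "\<forall>a\<in>TS \<times> US. ((case a of (T, U) \<Rightarrow> T \<union> U) \<inter> Y, (case a of (T, U) \<Rightarrow> T \<union> U) - Y) = a"
      proof
        fix a assume a: "a \<in> TS \<times> US"
        obtain T U where TU: "a = (T, U)" by (cases a)
        have "T \<subseteq> Y" "U \<subseteq> X - Y" using a TU unfolding TS_def US_def by auto
        then have "(T \<union> U) \<inter> Y = T" "(T \<union> U) - Y = U" by blast+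
        then show "((case a of (T, U) \<Rightarrow> T \<union> U) \<inter> Y, (case a of (T, U) \<Rightarrow> T \<union> U) - Y) = a" using TU by simp
      qed
      show "\<forall>a'\<in>{F \<in> Fs. card (F \<inter> Y) = k}. (case (a' \<inter> Y, a' - Y) of (T, U) \<Rightarrow> T \<union> U) = a'" by blast
      show "(\<lambda>(T, U). T \<union> U) ` (TS \<times> US) \<subseteq> {F \<in> Fs. card (F \<inter> Y) = k}"
      proof
        fix F assume "F \<in> (\<lambda>(T, U). T \<union> U) ` (TS \<times> US)"
        then obtain T U where TU: "T \<in> TS" "U \<in> US" "F = T \<union> U" by blast
        have T: "T \<subseteq> Y" "card T = k" using TU unfolding TS_def by auto
        have U: "U \<subseteq> X - Y" "card U = n - k" using TU unfolding US_def by auto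
        have fT: "finite T" using T Y X by (blast intro: finite_subset)
        have fU: "finite U" using U X by (blast intro: finite_subset)
        have dj: "T \<inter> U = {}" using T U by blast
        have "card F = n" using TU card_Un_disjoint[OF fT fU dj] T U kn by simp
        moreover have "F \<subseteq> X" using T U Y TU by blast
        moreover have "F \<inter> Y = T" using T U TU by blast
        ultimately show "F \<in> {F \<in> Fs. card (F \<inter> Y) = k}" unfolding Fs_def using T by simp
      qed
      show "(\<lambda>F. (F \<inter> Y, F - Y)) ` {F \<in> Fs. card (F \<inter> Y) = k} \<subseteq> TS \<times> US"
      proof
        fix p assume "p \<in> (\<lambda>F. (F \<inter> Y, F - Y)) ` {F \<in> Fs. card (F \<inter> Y) = k}"
        then obtain F where F: "F \<in> Fs" "card (F \<inter> Y) = k" "p = (F \<inter> Y, F - Y)" by blast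
        have Fs': "F \<subseteq> X" "card F = n" using F unfolding Fs_def by auto
        have fF: "finite F" using Fs' X by (blast intro: finite_subset)
        have "F - Y = F - (F \<inter> Y)" by blast
        then have "card (F - Y) = card F - card (F \<inter> Y)" using fF by (simp add: card_Diff_subset)
        then have "card (F - Y) = n - k" using F Fs' by simp
        then show "p \<in> TS \<times> US" unfolding TS_def US_def using F Fs' by blast
      qed
    qed
    show ?thesis using sum.reindex_bij_betw[OF bij, of "\<lambda>F. h (F \<inter> Y)"] by simp
  qed
  also have "\<dots> = (\<Sum>p\<in>TS \<times> US. h (fst p))"
  proof (rule sum.cong[OF refl])
    fix p assume p: "p \<in> TS \<times> US"
    obtain T U where TU: "p = (T, U)" by (cases p)
    have "T \<subseteq> Y" "U \<subseteq> X - Y" using p TU unfolding TS_def US_def by auto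
    then have "(T \<union> U) \<inter> Y = T" by blast
    then have "((\<lambda>(T,U). T \<union> U) p) \<inter> Y = fst p" using TU by simp
    then show "h (((\<lambda>(T,U). T \<union> U) p) \<inter> Y) = h (fst p)" by simp
  qed
  also have "\<dots> = (\<Sum>(T,U)\<in>TS \<times> US. h T)" by (rule sum.cong) auto
  also have "\<dots> = (\<Sum>T\<in>TS. \<Sum>U\<in>US. h T)" by (rule sum.cartesian_product[symmetric])
  also have "\<dots> = (\<Sum>T\<in>TS. real (card US) * h T)" by simp
  also have "card US = card (X - Y) choose (n - k)" unfolding US_def
    using n_subsets[of "X - Y" "n - k"] X by simp
  finally show ?thesis unfolding Fs_def TS_def by (simp add: sum_distrib_left)
qed




lemma inner_S:
  assumes NL: "N \<in> Lat N Lam" and S: "S \<in> {1..N-1}" and ell: "1 \<le> ell" and l: "1 \<le> l"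
  shows "(\<Sum>F0\<in>{B. B \<subseteq> {1..N-1} - {S} \<and> card B = l - 1}.
            if card (insert N F0 \<inter> Lat N Lam) = ell then w (insert S (insert N F0 \<inter> Lat N Lam)) else 0)
       = (if ell \<le> l then real (card ({1..N-1} - {S} - (Lat N Lam - {N} - {S})) choose (l - ell))
              * (\<Sum>T\<in>{T. T \<subseteq> Lat N Lam - {N} - {S} \<and> card T = ell - 1}. (w (insert S (insert N T)) :: real)) else 0)"
proof -
  define X where "X = {1..N-1} - {S}"
  define Y where "Y = Lat N Lam - {N} - {S}"
  have YX: "Y \<subseteq> X" unfolding X_def Y_def Lat_def by auto
  have fX: "finite X" unfolding X_def by simp
  have step: "(if card (insert N F0 \<inter> Lat N Lam) = ell then w (insert S (insert N F0 \<inter> Lat N Lam)) else 0)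
      = (if card (F0 \<inter> Y) = ell - 1 then w (insert S (insert N (F0 \<inter> Y))) else 0)"
    if F0: "F0 \<in> {B. B \<subseteq> X \<and> card B = l - 1}" for F0
  proof -
    have F0X: "F0 \<subseteq> X" using F0 by blast
    have e1: "insert N F0 \<inter> Lat N Lam = insert N (F0 \<inter> Y)" using F0X NL unfolding X_def Y_def by auto
    have fF: "finite (F0 \<inter> Y)" using F0X fX by (blast intro: finite_subset)
    have "N \<notin> F0 \<inter> Y" unfolding Y_def by blast
    then have "card (insert N (F0 \<inter> Y)) = card (F0 \<inter> Y) + 1" using fF by simp
    then have "(card (insert N F0 \<inter> Lat N Lam) = ell) = (card (F0 \<inter> Y) = ell - 1)" unfolding e1 using ell by auto
    then show ?thesis unfolding e1 by simp
  qed
  have "(\<Sum>F0\<in>{B. B \<subseteq> X \<and> card B = l - 1}.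
            if card (insert N F0 \<inter> Lat N Lam) = ell then w (insert S (insert N F0 \<inter> Lat N Lam)) else 0)
      = (\<Sum>F0\<in>{B. B \<subseteq> X \<and> card B = l - 1}. if card (F0 \<inter> Y) = ell - 1 then w (insert S (insert N (F0 \<inter> Y))) else 0)"
    by (rule sum.cong[OF refl]) (rule step)
  also have "\<dots> = (if ell \<le> l then real (card (X - Y) choose (l - ell))
              * (\<Sum>T\<in>{T. T \<subseteq> Y \<and> card T = ell - 1}. w (insert S (insert N T))) else 0)"
  proof (cases "ell \<le> l")
    case True
    have "l - 1 - (ell - 1) = l - ell" using ell by simp
    then show ?thesis using fiber[OF fX YX, of "ell - 1" "l - 1" "\<lambda>T. w (insert S (insert N T))"] True by simp
  next
    case False
    have "(if card (F0 \<inter> Y) = ell - 1 then w (insert S (insert N (F0 \<inter> Y))) else 0) = 0"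
      if F0: "F0 \<in> {B. B \<subseteq> X \<and> card B = l - 1}" for F0
    proof -
      have fF: "finite F0" using F0 fX by (blast intro: finite_subset)
      have "card (F0 \<inter> Y) \<le> card F0" using fF by (intro card_mono) auto
      then have "card (F0 \<inter> Y) \<noteq> ell - 1" using F0 False l by auto
      then show ?thesis by simp
    qed
    then show ?thesis using False by simp
  qed
  finally show ?thesis unfolding X_def Y_def .
qed




lemma off_le: assumes "x \<in> Off N Lam" "N \<in> Lat N Lam" shows "x \<in> {1..N-1}"
proof -
  have "x \<noteq> N" using assms unfolding Lat_def Off_def by auto
  then show ?thesis using assms(1) unfolding Off_def by auto
qed

lemma split_range:
  assumes NL: "N \<in> Lat N Lam"
  shows "{1..N-1} = (Lat N Lam - {N}) \<union> Off N Lam" "(Lat N Lam - {N}) \<inter> Off N Lam = {}"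
    "finite (Lat N Lam - {N})"
proof -
  have "Off N Lam \<subseteq> {1..N-1}" using off_le[OF _ NL] by blast
  moreover have "Lat N Lam - {N} \<subseteq> {1..N-1}" unfolding Lat_def by auto
  moreover have "{1..N-1} \<subseteq> (Lat N Lam - {N}) \<union> Off N Lam" unfolding Lat_def Off_def by auto
  ultimately show "{1..N-1} = (Lat N Lam - {N}) \<union> Off N Lam" by blast
  show "(Lat N Lam - {N}) \<inter> Off N Lam = {}" unfolding Lat_def Off_def by auto
  show "finite (Lat N Lam - {N})" using finite_Lat by blast
qed

lemma combine:
  fixes lo hi a b C1 C2 Y1 Y2 :: real
  assumes "a \<ge> 0" "b \<ge> 0" "lo * C1 \<le> Y1" "Y1 \<le> hi * C1" "lo * C2 \<le> Y2" "Y2 \<le> hi * C2"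
  shows "lo * (a * C1 + b * C2) \<le> a * Y1 + b * Y2 \<and> a * Y1 + b * Y2 \<le> hi * (a * C1 + b * C2)"
proof -
  have "a * (lo * C1) \<le> a * Y1" "b * (lo * C2) \<le> b * Y2" "a * Y1 \<le> a * (hi * C1)" "b * Y2 \<le> b * (hi * C2)"
    using assms by (simp_all add: mult_left_mono)
  then show ?thesis by (simp add: algebra_simps)
qed

lemma per_l:
  assumes L: "0 < Lam" "Lam dvd N" "0 < N" "N = e * Lam" and ell: "1 \<le> ell" "ell \<le> e" and l: "1 \<le> l"
  shows "1 / (real ell + 1) * (1 - 1 / (real ell * real e)) *
          (\<Sum>S\<in>{1..N-1}. \<Sum>F0\<in>{B. B \<subseteq> {1..N-1} - {S} \<and> card B = l - 1}.
            if card (insert N F0 \<inter> Lat N Lam) = ell then (1::real) else 0)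
        \<le> (\<Sum>S\<in>{1..N-1}. \<Sum>F0\<in>{B. B \<subseteq> {1..N-1} - {S} \<and> card B = l - 1}.
            if card (insert N F0 \<inter> Lat N Lam) = ell then gw N (insert S (insert N F0 \<inter> Lat N Lam)) N else 0)
      \<and> (\<Sum>S\<in>{1..N-1}. \<Sum>F0\<in>{B. B \<subseteq> {1..N-1} - {S} \<and> card B = l - 1}.
            if card (insert N F0 \<inter> Lat N Lam) = ell then gw N (insert S (insert N F0 \<inter> Lat N Lam)) N else 0)
        \<le> 1 / (real ell + 1) * (1 + 1 / real e) *
          (\<Sum>S\<in>{1..N-1}. \<Sum>F0\<in>{B. B \<subseteq> {1..N-1} - {S} \<and> card B = l - 1}.
            if card (insert N F0 \<inter> Lat N Lam) = ell then (1::real) else 0)"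
  (is "?lo * ?den \<le> ?num \<and> ?num \<le> ?hi * ?den")
proof -
  have NL: "N \<in> Lat N Lam" by (rule N_Lat[OF L(1-3)])
  note sr = split_range[OF NL]
  define K where "K S = {B. B \<subseteq> {1..N-1} - {S} \<and> card B = l - 1}" for S
  define TL where "TL S = {T. T \<subseteq> Lat N Lam - {N} - {S} \<and> card T = ell - 1}" for S
  define inner where "inner w S = (\<Sum>F0\<in>K S. if card (insert N F0 \<inter> Lat N Lam) = ell then w (insert S (insert N F0 \<inter> Lat N Lam)) else (0::real))" for w S
  have inn: "inner w S = (if ell \<le> l then real (card ({1..N-1} - {S} - (Lat N Lam - {N} - {S})) choose (l - ell))
              * (\<Sum>T\<in>TL S. w (insert S (insert N T))) else 0)" if S: "S \<in> {1..N-1}" for w S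
    unfolding inner_def K_def TL_def by (rule inner_S[OF NL S ell(1) l])
  have num: "?num = (\<Sum>S\<in>{1..N-1}. inner (\<lambda>W. gw N W N) S)" unfolding inner_def K_def by simp
  have den: "?den = (\<Sum>S\<in>{1..N-1}. inner (\<lambda>W. 1) S)" unfolding inner_def K_def by simp
  have lo1: "?lo \<le> 1 / (real ell + 1)"
  proof -
    have "0 \<le> 1 / (real ell * real e)" by simp
    then have "1 - 1 / (real ell * real e) \<le> 1" by simp
    then show ?thesis by (simp add: divide_right_mono)
  qed
  have hi1: "1 / (real ell + 1) \<le> ?hi"
  proof -
    have "1 \<le> 1 + 1 / real e" by simp
    then show ?thesis by (simp add: divide_right_mono)
  qed
  show ?thesis
  proof (cases "ell \<le> l")
    case False
    have "inner w S = 0" if "S \<in> {1..N-1}" for w S using inn[OF that] False by simp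
    then have "?num = 0" "?den = 0" unfolding num den by simp_all
    then show ?thesis by simp
  next
    case True
    define cO where "cO = card (Off N Lam)"
    have setL: "{1..N-1} - {S} - (Lat N Lam - {N} - {S}) = Off N Lam" if "S \<in> Lat N Lam - {N}" for S
    proof -
      have "Off N Lam \<subseteq> {1..N-1}" using off_le[OF _ NL] by blast
      then show ?thesis using that unfolding Lat_def Off_def by auto
    qed
    have setO: "{1..N-1} - {S} - (Lat N Lam - {N} - {S}) = Off N Lam - {S}" if "S \<in> Off N Lam" for S
    proof -
      have "Off N Lam \<subseteq> {1..N-1}" using off_le[OF _ NL] by blast
      then show ?thesis using that unfolding Lat_def Off_def by auto
    qed
    have TLO: "TL S = {T. T \<subseteq> Lat N Lam - {N} \<and> card T = ell - 1}" if "S \<in> Off N Lam" for S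
    proof -
      have "Lat N Lam - {N} - {S} = Lat N Lam - {N}" using that unfolding Lat_def Off_def by auto
      then show ?thesis unfolding TL_def by simp
    qed
    have cOS: "card (Off N Lam - {S}) = cO - 1" if "S \<in> Off N Lam" for S
      using that finite_Off unfolding cO_def by simp
    define a where "a = real (cO choose (l - ell))"
    define b where "b = real ((cO - 1) choose (l - ell))"
    have sumw: "(\<Sum>S\<in>{1..N-1}. inner w S) =
        a * (\<Sum>S\<in>Lat N Lam - {N}. \<Sum>T\<in>TL S. w (insert S (insert N T)))
      + b * (\<Sum>S\<in>Off N Lam. \<Sum>T\<in>{T. T \<subseteq> Lat N Lam - {N} \<and> card T = ell - 1}. w (insert S (insert N T)))" for w
    proof -
      have "(\<Sum>S\<in>{1..N-1}. inner w S) = (\<Sum>S\<in>Lat N Lam - {N}. inner w S) + (\<Sum>S\<in>Off N Lam. inner w S)"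
        unfolding sr(1) by (rule sum.union_disjoint[OF sr(3) finite_Off sr(2)])
      also have "(\<Sum>S\<in>Lat N Lam - {N}. inner w S) = (\<Sum>S\<in>Lat N Lam - {N}. a * (\<Sum>T\<in>TL S. w (insert S (insert N T))))"
      proof (rule sum.cong[OF refl])
        fix S assume S: "S \<in> Lat N Lam - {N}"
        then have "S \<in> {1..N-1}" using sr by blast
        then show "inner w S = a * (\<Sum>T\<in>TL S. w (insert S (insert N T)))"
          using inn setL[OF S] True unfolding a_def cO_def by simp
      qed
      also have "(\<Sum>S\<in>Off N Lam. inner w S) = (\<Sum>S\<in>Off N Lam. b * (\<Sum>T\<in>{T. T \<subseteq> Lat N Lam - {N} \<and> card T = ell - 1}. w (insert S (insert N T))))"
      proof (rule sum.cong[OF refl])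
        fix S assume S: "S \<in> Off N Lam"
        then have "S \<in> {1..N-1}" using sr by blast
        then show "inner w S = b * (\<Sum>T\<in>{T. T \<subseteq> Lat N Lam - {N} \<and> card T = ell - 1}. w (insert S (insert N T)))"
          using inn setO[OF S] cOS[OF S] TLO[OF S] True unfolding b_def by simp
      qed
      finally show ?thesis by (simp add: sum_distrib_left)
    qed
    define YLat where "YLat = (\<Sum>S\<in>Lat N Lam - {N}. \<Sum>T\<in>TL S. gw N (insert S (insert N T)) N)"
    define CLat where "CLat = (\<Sum>S\<in>Lat N Lam - {N}. \<Sum>T\<in>TL S. (1::real))"
    define XOf where "XOf = (\<Sum>S\<in>Off N Lam. \<Sum>T\<in>{T. T \<subseteq> Lat N Lam - {N} \<and> card T = ell - 1}. gw N (insert S (insert N T)) N)"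
    define COf where "COf = (\<Sum>S\<in>Off N Lam. \<Sum>T\<in>{T. T \<subseteq> Lat N Lam - {N} \<and> card T = ell - 1}. (1::real))"
    have numE: "?num = a * YLat + b * XOf" unfolding num sumw YLat_def XOf_def by simp
    have denE: "?den = a * CLat + b * COf" unfolding den sumw CLat_def COf_def by simp
    have k1: "ell - 1 + 1 = ell" using ell by simp
    have XOfE: "XOf = (\<Sum>S\<in>Off N Lam. \<Sum>T\<in>Fam N Lam ell N. gw N (insert S T) N)"
      unfolding XOf_def
    proof (rule sum.cong[OF refl])
      fix S assume "S \<in> Off N Lam"
      show "(\<Sum>T\<in>{T. T \<subseteq> Lat N Lam - {N} \<and> card T = ell - 1}. gw N (insert S (insert N T)) N)
          = (\<Sum>T\<in>Fam N Lam ell N. gw N (insert S T) N)"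
        using off_reindex[OF NL, where k="ell - 1" and g="\<lambda>W. gw N (insert S W) N"] k1 by simp
    qed
    have COfE: "COf = real (card (Off N Lam)) * real (card (Fam N Lam ell N))"
      unfolding COf_def using off_reindex[OF NL, where k="ell - 1" and g="\<lambda>W. 1"] k1 by simp
    have oc: "?lo * COf \<le> XOf \<and> XOf \<le> ?hi * COf"
      unfolding XOfE COfE using off_class[OF L ell] by (simp add: mult.assoc)
    have lc: "(real ell + 1) * YLat = CLat"
      unfolding YLat_def CLat_def TL_def by (rule lat_class[OF L ell])
    have CL0: "CLat \<ge> 0" unfolding CLat_def by (simp add: sum_nonneg)
    have YL: "YLat = 1 / (real ell + 1) * CLat" using lc by (simp add: field_simps)
    have lat1: "?lo * CLat \<le> YLat" unfolding YL using lo1 CL0 by (intro mult_right_mono) auto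
    have lat2: "YLat \<le> ?hi * CLat" unfolding YL using hi1 CL0 by (intro mult_right_mono) auto
    have "?lo * (a * CLat + b * COf) \<le> a * YLat + b * XOf \<and> a * YLat + b * XOf \<le> ?hi * (a * CLat + b * COf)"
      by (rule combine) (use lat1 lat2 oc in \<open>auto simp: a_def b_def\<close>)
    then show ?thesis unfolding numE denE .
  qed
qed




lemma prob_bind_pmf: "measure_pmf.prob (bind_pmf p f) A = measure_pmf.expectation p (\<lambda>x. measure_pmf.prob (f x) A)"
  unfolding measure_pmf_bind
proof (rule measure_pmf.measure_bind[where N="count_space UNIV"])
  show "(\<lambda>x. measure_pmf (f x)) \<in> measure_pmf p \<rightarrow>\<^sub>M subprob_algebra (count_space UNIV)"
    by (auto simp: measurable_def space_subprob_algebra sets_measure_pmf_count_space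
                 prob_space_imp_subprob_space measure_pmf.prob_space_axioms)
  show "A \<in> sets (count_space UNIV)" by simp
qed

lemma cond_prob: assumes "measure_pmf.prob p s > 0"
  shows "measure_pmf.prob (cond_pmf p s) A = measure_pmf.prob p (s \<inter> A) / measure_pmf.prob p s"
proof -
  have "measure_pmf.prob p s \<noteq> 0" using assms by simp
  then have ne: "set_pmf p \<inter> s \<noteq> {}" using measure_pmf_zero_iff[of p s] by blast
  have e: "measure_pmf (cond_pmf p s) = uniform_measure (measure_pmf p) s" by (rule cond_pmf.rep_eq[OF ne])
  have z: "emeasure (measure_pmf p) s \<noteq> 0" by (rule emeasure_measure_pmf_not_zero[OF ne])
  have i: "emeasure (measure_pmf p) s \<noteq> \<infinity>" using measure_pmf.emeasure_finite[of p s] by (simp add: top_ennreal_def)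
  show ?thesis unfolding e by (rule measure_uniform_measure[OF z i]) simp
qed

lemma prob_HT:
  assumes N: "2 \<le> N" and nu: "set_pmf \<nu> \<subseteq> {1..N-1}"
  shows "measure_pmf.prob (hotspot_traffic N Lam \<nu>) Q =
    (\<Sum>S\<in>{1..N-1}. \<Sum>l\<in>{1..N-1}.
       (\<Sum>F0\<in>{B. B \<subseteq> {1..N-1} - {S} \<and> card B = l - 1}.
          measure_pmf.prob (pmf_of_set (largest_gap_starts N (insert S (insert N F0 \<inter> homed N Lam Lam))))
             ((\<lambda>G. (S, insert N F0, G)) -` Q)) / real (card {B. B \<subseteq> {1..N-1} - {S} \<and> card B = l - 1}) * pmf \<nu> l)
    / real (card {1..N-1})"
proof -
  have ne1: "{1..N-1} \<noteq> {}" using N by simp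
  have K: "{B. B \<subseteq> {1..N-1} - {S} \<and> card B = l - 1} \<noteq> {}" "finite {B. B \<subseteq> {1..N-1} - {S} \<and> card B = l - 1}"
    if S: "S \<in> {1..N-1}" and l: "l \<in> {1..N-1}" for S l
  proof -
    have c: "card ({1..N-1} - {S}) = N - 2" using S by simp
    have "l - 1 \<le> N - 1 - 1" using l by (intro diff_le_mono) simp
    then have "l - 1 \<le> N - 2" by simp
    then obtain B where "B \<subseteq> {1..N-1} - {S}" "card B = l - 1"
      using c by (metis finite_Diff finite_atLeastAtMost obtain_subset_with_card_n)
    then show "{B. B \<subseteq> {1..N-1} - {S} \<and> card B = l - 1} \<noteq> {}" by blast
    have "{B. B \<subseteq> {1..N-1} - {S} \<and> card B = l - 1} \<subseteq> Pow ({1..N-1} - {S})" by blast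
    then show "finite {B. B \<subseteq> {1..N-1} - {S} \<and> card B = l - 1}" by (rule finite_subset) simp
  qed
  have IK: "measure_pmf.expectation (pmf_of_set {B. B \<subseteq> {1..N-1} - {S} \<and> card B = l - 1}) f
       = sum f {B. B \<subseteq> {1..N-1} - {S} \<and> card B = l - 1} / real (card {B. B \<subseteq> {1..N-1} - {S} \<and> card B = l - 1})"
    if "S \<in> {1..N-1}" "l \<in> {1..N-1}" for S l and f :: "nat set \<Rightarrow> real"
    by (rule integral_pmf_of_set[OF K[OF that]])
  show ?thesis
    unfolding hotspot_traffic_def prob_bind_pmf map_pmf_def[symmetric] measure_map_pmf
    apply (subst integral_pmf_of_set[OF ne1], simp)
    apply (rule arg_cong[where f="\<lambda>x. x / real (card {1..N-1})"])
    apply (rule sum.cong[OF refl])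
    apply (subst integral_measure_pmf_real[where A="{1..N-1}"], simp, use nu in blast)
    apply (rule sum.cong[OF refl])
    apply (subst IK, assumption, assumption)
    apply (rule refl)
    done
qed




theorem proposition5p1:
  fixes N Lam ell :: nat and \<nu> :: "nat pmf"
  assumes "Lam > 0" and "Lam dvd N" and "N \<ge> 2"
    and "set_pmf \<nu> \<subseteq> {1..N-1}"
    and "ell \<in> {1..N div Lam}"
    and "measure_pmf.prob (hotspot_traffic N Lam \<nu>)
           {\<omega>. card (fst (snd \<omega>) \<inter> homed N Lam Lam) = ell} > 0"
  shows "1 / (real ell + 1) * (1 - 1 / (real ell * real (N div Lam)))
           \<le> measure_pmf.prob (cond_pmf (hotspot_traffic N Lam \<nu>)
                 {\<omega>. card (fst (snd \<omega>) \<inter> homed N Lam Lam) = ell}) {\<omega>. snd (snd \<omega>) = 0}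
       \<and> measure_pmf.prob (cond_pmf (hotspot_traffic N Lam \<nu>)
                 {\<omega>. card (fst (snd \<omega>) \<inter> homed N Lam Lam) = ell}) {\<omega>. snd (snd \<omega>) = 0}
           \<le> 1 / (real ell + 1) * (1 + 1 / real (N div Lam))"
proof -
  obtain e where e: "N = e * Lam" using assms(2) by (metis dvd_def mult.commute)
  have ed: "N div Lam = e" using e assms(1) by simp
  have N0: "0 < N" using assms(3) by simp
  have L: "0 < Lam" "Lam dvd N" "0 < N" "N = e * Lam" using assms(1,2) N0 e by auto
  have ell: "1 \<le> ell" "ell \<le> e" using assms(5) ed by auto
  have H: "homed N Lam Lam = Lat N Lam" by (rule homed_Lat[OF L(1,2)])
  have NL: "N \<in> Lat N Lam" by (rule N_Lat[OF L(1-3)])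
  define lo where "lo = 1 / (real ell + 1) * (1 - 1 / (real ell * real e))"
  define hi where "hi = 1 / (real ell + 1) * (1 + 1 / real e)"
  define HT where "HT = hotspot_traffic N Lam \<nu>"
  define Cs where "Cs = {\<omega>::nat \<times> nat set \<times> nat. card (fst (snd \<omega>) \<inter> homed N Lam Lam) = ell}"
  define Es where "Es = {\<omega>::nat \<times> nat set \<times> nat. snd (snd \<omega>) = 0}"
  define K where "K S l = {B. B \<subseteq> {1..N-1} - {S} \<and> card B = l - 1}" for S l
  define num where "num S l = (\<Sum>F0\<in>K S l. if card (insert N F0 \<inter> Lat N Lam) = ell
      then gw N (insert S (insert N F0 \<inter> Lat N Lam)) N else 0)" for S l
  define den where "den S l = (\<Sum>F0\<in>K S l. if card (insert N F0 \<inter> Lat N Lam) = ell then (1::real) else 0)" for S l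
  have Aok: "insert S (insert N F0 \<inter> Lat N Lam) \<subseteq> {1..N} \<and> finite (insert S (insert N F0 \<inter> Lat N Lam))
      \<and> 2 \<le> card (insert S (insert N F0 \<inter> Lat N Lam)) \<and> N \<in> insert S (insert N F0 \<inter> Lat N Lam)"
    if S: "S \<in> {1..N-1}" for S F0
  proof -
    have s1: "insert N F0 \<inter> Lat N Lam \<subseteq> {1..N}" unfolding Lat_def by blast
    have f: "finite (insert N F0 \<inter> Lat N Lam)" using finite_Lat by blast
    have SN: "S \<noteq> N" "S \<in> {1..N}" using S by auto
    have "{S, N} \<subseteq> insert S (insert N F0 \<inter> Lat N Lam)" using NL by blast
    then have "card {S, N} \<le> card (insert S (insert N F0 \<inter> Lat N Lam))" using f by (intro card_mono) auto
    then have "2 \<le> card (insert S (insert N F0 \<inter> Lat N Lam))" using SN by simp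
    then show ?thesis using s1 f SN NL by auto
  qed
  have pre1: "measure_pmf.prob (pmf_of_set (largest_gap_starts N (insert S (insert N F0 \<inter> homed N Lam Lam))))
             ((\<lambda>G. (S, insert N F0, G)) -` (Cs \<inter> Es))
      = (if card (insert N F0 \<inter> Lat N Lam) = ell then gw N (insert S (insert N F0 \<inter> Lat N Lam)) N else 0)"
    if S: "S \<in> {1..N-1}" for S F0
  proof (cases "card (insert N F0 \<inter> Lat N Lam) = ell")
    case True
    have "(\<lambda>G. (S, insert N F0, G)) -` (Cs \<inter> Es) = {0}" unfolding Cs_def Es_def H using True by auto
    then show ?thesis unfolding H using True prob_LGS(3)[OF L(3)] Aok[OF S, of F0] by simp
  next
    case False
    have "(\<lambda>G. (S, insert N F0, G)) -` (Cs \<inter> Es) = {}" unfolding Cs_def Es_def H using False by auto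
    then show ?thesis using False by simp
  qed
  have pre2: "measure_pmf.prob (pmf_of_set (largest_gap_starts N (insert S (insert N F0 \<inter> homed N Lam Lam))))
             ((\<lambda>G. (S, insert N F0, G)) -` Cs)
      = (if card (insert N F0 \<inter> Lat N Lam) = ell then 1 else 0)"
    if S: "S \<in> {1..N-1}" for S F0
  proof (cases "card (insert N F0 \<inter> Lat N Lam) = ell")
    case True
    have "(\<lambda>G. (S, insert N F0, G)) -` Cs = UNIV" unfolding Cs_def H using True by auto
    then show ?thesis using True by simp
  next
    case False
    have "(\<lambda>G. (S, insert N F0, G)) -` Cs = {}" unfolding Cs_def H using False by auto
    then show ?thesis using False by simp
  qed
  have kap: "real (card (K S l)) = real ((N - 2) choose (l - 1))" if S: "S \<in> {1..N-1}" for S l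
  proof -
    have "card ({1..N-1} - {S}) = N - 2" using S by simp
    then show ?thesis unfolding K_def using n_subsets[of "{1..N-1} - {S}" "l - 1"] by simp
  qed
  define w where "w l = pmf \<nu> l / real ((N - 2) choose (l - 1))" for l
  have w0: "w l \<ge> 0" for l unfolding w_def by simp
  have PCE: "measure_pmf.prob HT (Cs \<inter> Es) = (\<Sum>l\<in>{1..N-1}. w l * (\<Sum>S\<in>{1..N-1}. num S l)) / real (card {1..N-1})"
  proof -
    have "measure_pmf.prob HT (Cs \<inter> Es) = (\<Sum>S\<in>{1..N-1}. \<Sum>l\<in>{1..N-1}.
         (\<Sum>F0\<in>K S l. measure_pmf.prob (pmf_of_set (largest_gap_starts N (insert S (insert N F0 \<inter> homed N Lam Lam))))
             ((\<lambda>G. (S, insert N F0, G)) -` (Cs \<inter> Es))) / real (card (K S l)) * pmf \<nu> l) / real (card {1..N-1})"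
      unfolding HT_def K_def by (rule prob_HT[OF assms(3,4)])
    also have "\<dots> = (\<Sum>S\<in>{1..N-1}. \<Sum>l\<in>{1..N-1}. num S l / real (card (K S l)) * pmf \<nu> l) / real (card {1..N-1})"
    proof -
      have "(\<Sum>F0\<in>K S l. measure_pmf.prob (pmf_of_set (largest_gap_starts N (insert S (insert N F0 \<inter> homed N Lam Lam))))
             ((\<lambda>G. (S, insert N F0, G)) -` (Cs \<inter> Es))) = num S l" if "S \<in> {1..N-1}" for S l
        unfolding num_def by (rule sum.cong[OF refl]) (rule pre1[OF that])
      then show ?thesis by simp
    qed
    also have "(\<Sum>S\<in>{1..N-1}. \<Sum>l\<in>{1..N-1}. num S l / real (card (K S l)) * pmf \<nu> l)
        = (\<Sum>S\<in>{1..N-1}. \<Sum>l\<in>{1..N-1}. w l * num S l)"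
      by (intro sum.cong refl) (simp add: kap w_def)
    also have "\<dots> = (\<Sum>l\<in>{1..N-1}. \<Sum>S\<in>{1..N-1}. w l * num S l)" by (rule sum.swap)
    also have "\<dots> = (\<Sum>l\<in>{1..N-1}. w l * (\<Sum>S\<in>{1..N-1}. num S l))" by (simp add: sum_distrib_left)
    finally show ?thesis .
  qed
  have PC: "measure_pmf.prob HT Cs = (\<Sum>l\<in>{1..N-1}. w l * (\<Sum>S\<in>{1..N-1}. den S l)) / real (card {1..N-1})"
  proof -
    have "measure_pmf.prob HT Cs = (\<Sum>S\<in>{1..N-1}. \<Sum>l\<in>{1..N-1}.
         (\<Sum>F0\<in>K S l. measure_pmf.prob (pmf_of_set (largest_gap_starts N (insert S (insert N F0 \<inter> homed N Lam Lam))))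
             ((\<lambda>G. (S, insert N F0, G)) -` (Cs))) / real (card (K S l)) * pmf \<nu> l) / real (card {1..N-1})"
      unfolding HT_def K_def by (rule prob_HT[OF assms(3,4)])
    also have "\<dots> = (\<Sum>S\<in>{1..N-1}. \<Sum>l\<in>{1..N-1}. den S l / real (card (K S l)) * pmf \<nu> l) / real (card {1..N-1})"
    proof -
      have "(\<Sum>F0\<in>K S l. measure_pmf.prob (pmf_of_set (largest_gap_starts N (insert S (insert N F0 \<inter> homed N Lam Lam))))
             ((\<lambda>G. (S, insert N F0, G)) -` (Cs))) = den S l" if "S \<in> {1..N-1}" for S l
        unfolding den_def by (rule sum.cong[OF refl]) (rule pre2[OF that])
      then show ?thesis by simp
    qed
    also have "(\<Sum>S\<in>{1..N-1}. \<Sum>l\<in>{1..N-1}. den S l / real (card (K S l)) * pmf \<nu> l)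
        = (\<Sum>S\<in>{1..N-1}. \<Sum>l\<in>{1..N-1}. w l * den S l)"
      by (intro sum.cong refl) (simp add: kap w_def)
    also have "\<dots> = (\<Sum>l\<in>{1..N-1}. \<Sum>S\<in>{1..N-1}. w l * den S l)" by (rule sum.swap)
    also have "\<dots> = (\<Sum>l\<in>{1..N-1}. w l * (\<Sum>S\<in>{1..N-1}. den S l))" by (simp add: sum_distrib_left)
    finally show ?thesis .
  qed
  have pl: "lo * (\<Sum>S\<in>{1..N-1}. den S l) \<le> (\<Sum>S\<in>{1..N-1}. num S l)
        \<and> (\<Sum>S\<in>{1..N-1}. num S l) \<le> hi * (\<Sum>S\<in>{1..N-1}. den S l)" if l: "l \<in> {1..N-1}" for l
    using per_l[OF L ell, of l] l unfolding lo_def hi_def num_def den_def K_def by simp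
  define Dn where "Dn = (\<Sum>l\<in>{1..N-1}. w l * (\<Sum>S\<in>{1..N-1}. den S l))"
  define Nm where "Nm = (\<Sum>l\<in>{1..N-1}. w l * (\<Sum>S\<in>{1..N-1}. num S l))"
  have b1: "lo * Dn \<le> Nm"
  proof -
    have "lo * Dn = (\<Sum>l\<in>{1..N-1}. w l * (lo * (\<Sum>S\<in>{1..N-1}. den S l)))"
      unfolding Dn_def by (simp add: sum_distrib_left algebra_simps)
    also have "\<dots> \<le> Nm" unfolding Nm_def
      using pl w0 by (intro sum_mono mult_left_mono) auto
    finally show ?thesis .
  qed
  have b2: "Nm \<le> hi * Dn"
  proof -
    have "Nm \<le> (\<Sum>l\<in>{1..N-1}. w l * (hi * (\<Sum>S\<in>{1..N-1}. den S l)))" unfolding Nm_def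
      using pl w0 by (intro sum_mono mult_left_mono) auto
    also have "\<dots> = hi * Dn" unfolding Dn_def by (simp add: sum_distrib_left algebra_simps)
    finally show ?thesis .
  qed
  have cpos: "real (card {1..N-1}) > 0" using assms(3) by simp
  have PCpos: "measure_pmf.prob HT Cs > 0" using assms(6) unfolding HT_def Cs_def by simp
  have Dpos: "Dn > 0" using PCpos cpos unfolding PC Dn_def by (simp add: zero_less_divide_iff)
  have ratio: "measure_pmf.prob (cond_pmf HT Cs) Es = Nm / Dn"
    using cond_prob[OF PCpos, of Es] PCE PC cpos unfolding Nm_def Dn_def by simp
  have "lo \<le> Nm / Dn" using b1 Dpos by (simp add: le_divide_eq)
  moreover have "Nm / Dn \<le> hi" using b2 Dpos by (simp add: divide_le_eq)
  ultimately show ?thesis using ratio unfolding lo_def hi_def HT_def Cs_def Es_def ed by simp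
qed



end
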